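(* If a graph $G$ has a $(w,p)$-good tree decomposition, then the layered pathwidth of $G$ is at most $w(p+1)(w+1)$.
   Context: A tree decomposition of $G$ is a family $(B_x\subseteq V(G): x\in V(T))$ indexed by the nodes of a tree $T$ such that each edge of $G$ has both endpoints in some bag and, for each $v\in V(G)$, the nodes $x$ with $v\in B_x$ induce a non-empty connected subtree $T[v]$ of $T$; its width is the maximum bag size minus 1. A path decomposition is a tree decomposition indexed by a path; pathwidth $\operatorname{pw}$ is the minimum width of a path decomposition. A tree decomposition is $(w,p)$-good if its width is at most $w$ and $\operatorname{pw}(T[v])\le p$ for every $v\in V(G)$. A layering of $G$ is a partition $(V_0,\dots,V_t)$ of $V(G)$ such that every edge joins vertices in the same or consecutive layers. The layered width of a path decomposition is the minimum $\ell$ such that for some layering each bag contains at most $\ell$ vertices of each layer; the layered pathwidth of $G$ is the minimum layered width over path decompositions of $G$. *)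

theory Defs
  imports Main
begin

definition graph :: "'a set \<Rightarrow> 'a set set \<Rightarrow> bool" where
  "graph V E \<longleftrightarrow> finite V \<and> (\<forall>e\<in>E. card e = 2 \<and> e \<subseteq> V)"

definition connected_in :: "'a set set \<Rightarrow> 'a set \<Rightarrow> bool" where
  "connected_in E S \<longleftrightarrow>
     (\<forall>u\<in>S. \<forall>v\<in>S. (u, v) \<in> {(x, y). {x, y} \<in> E \<and> x \<in> S \<and> y \<in> S}\<^sup>*)"

text \<open>A tree: a finite nonempty connected graph with |N| - 1 edges (i.e. connected and acyclic).\<close>
definition tree :: "'b set \<Rightarrow> 'b set set \<Rightarrow> bool" where
  "tree N F \<longleftrightarrow> graph N F \<and> N \<noteq> {} \<and> connected_in F N \<and> card F = card N - 1"

definition tree_decomposition ::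
  "'a set \<Rightarrow> 'a set set \<Rightarrow> 'b set \<Rightarrow> 'b set set \<Rightarrow> ('b \<Rightarrow> 'a set) \<Rightarrow> bool" where
  "tree_decomposition V E N F B \<longleftrightarrow>
     tree N F \<and> (\<forall>x\<in>N. B x \<subseteq> V) \<and>
     (\<forall>e\<in>E. \<exists>x\<in>N. e \<subseteq> B x) \<and>
     (\<forall>v\<in>V. {x\<in>N. v \<in> B x} \<noteq> {} \<and> connected_in F {x\<in>N. v \<in> B x})"

text \<open>Path decomposition: a tree decomposition indexed by a path, given as the
  nonempty list of bags in path order (each vertex occupies a nonempty contiguous interval).\<close>
definition path_decomposition :: "'a set \<Rightarrow> 'a set set \<Rightarrow> 'a set list \<Rightarrow> bool" where
  "path_decomposition V E Ps \<longleftrightarrow>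
     Ps \<noteq> [] \<and> (\<forall>X\<in>set Ps. X \<subseteq> V) \<and>
     (\<forall>e\<in>E. \<exists>X\<in>set Ps. e \<subseteq> X) \<and>
     (\<forall>v\<in>V. (\<exists>X\<in>set Ps. v \<in> X) \<and>
        (\<forall>i j k. i \<le> j \<and> j \<le> k \<and> k < length Ps \<and> v \<in> Ps ! i \<and> v \<in> Ps ! k
                  \<longrightarrow> v \<in> Ps ! j))"

definition pathwidth_le :: "'a set \<Rightarrow> 'a set set \<Rightarrow> nat \<Rightarrow> bool" where
  "pathwidth_le V E k \<longleftrightarrow>
     (\<exists>Ps. path_decomposition V E Ps \<and> (\<forall>X\<in>set Ps. card X \<le> k + 1))"

definition subtree_of :: "'b set \<Rightarrow> 'b set set \<Rightarrow> ('b \<Rightarrow> 'a set) \<Rightarrow> 'a \<Rightarrow> 'b set \<times> 'b set set" where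
  "subtree_of N F B v = ({x\<in>N. v \<in> B x}, {e\<in>F. e \<subseteq> {x\<in>N. v \<in> B x}})"

definition good_tree_decomposition ::
  "nat \<Rightarrow> nat \<Rightarrow> 'a set \<Rightarrow> 'a set set \<Rightarrow> 'b set \<Rightarrow> 'b set set \<Rightarrow> ('b \<Rightarrow> 'a set) \<Rightarrow> bool" where
  "good_tree_decomposition w p V E N F B \<longleftrightarrow>
     tree_decomposition V E N F B \<and> (\<forall>x\<in>N. card (B x) \<le> w + 1) \<and>
     (\<forall>v\<in>V. pathwidth_le (fst (subtree_of N F B v)) (snd (subtree_of N F B v)) p)"

text \<open>A layering, given by the layer index of each vertex (V_i = {v. f v = i}).\<close>
definition layering :: "'a set set \<Rightarrow> ('a \<Rightarrow> nat) \<Rightarrow> bool" where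
  "layering E f \<longleftrightarrow> (\<forall>u v. {u, v} \<in> E \<longrightarrow> f u \<le> f v + 1 \<and> f v \<le> f u + 1)"

definition layered_pathwidth_le :: "'a set \<Rightarrow> 'a set set \<Rightarrow> nat \<Rightarrow> bool" where
  "layered_pathwidth_le V E l \<longleftrightarrow>
     (\<exists>Ps f. path_decomposition V E Ps \<and> layering E f \<and>
        (\<forall>X\<in>set Ps. \<forall>i. card {v\<in>X. f v = i} \<le> l))"

end

theory Submission
  imports Defs
begin


definition rel :: "'b set set \<Rightarrow> 'b set \<Rightarrow> ('b \<times> 'b) set" where
  "rel F K = {(x, y). {x, y} \<in> F \<and> x \<in> K \<and> y \<in> K}"

lemma connected_in_rel: "connected_in F K \<longleftrightarrow> (\<forall>u\<in>K. \<forall>v\<in>K. (u, v) \<in> (rel F K)\<^sup>*)"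
  unfolding connected_in_def rel_def by simp

lemma rel_sym: "(x, y) \<in> (rel F K)\<^sup>* \<Longrightarrow> (y, x) \<in> (rel F K)\<^sup>*"
proof (induction rule: rtrancl_induct)
  case (step y z)
  then have "(z, y) \<in> rel F K" by (auto simp: rel_def insert_commute)
  then show ?case using step.IH by (meson converse_rtrancl_into_rtrancl)
qed simp

lemma rel_mono: "K \<subseteq> K' \<Longrightarrow> F \<subseteq> F' \<Longrightarrow> (x, y) \<in> (rel F K)\<^sup>* \<Longrightarrow> (x, y) \<in> (rel F' K')\<^sup>*"
proof -
  assume "K \<subseteq> K'" "F \<subseteq> F'"
  then have "rel F K \<subseteq> rel F' K'" unfolding rel_def by auto
  then show "(x, y) \<in> (rel F K)\<^sup>* \<Longrightarrow> (x, y) \<in> (rel F' K')\<^sup>*" using rtrancl_mono by blast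
qed

lemma rel_in: "(x, y) \<in> (rel F K)\<^sup>* \<Longrightarrow> x = y \<or> (x \<in> K \<and> y \<in> K)"
  by (induction rule: rtrancl_induct) (auto simp: rel_def)

lemma rel_step: "(x, y) \<in> (rel F K)\<^sup>* \<Longrightarrow> {y, z} \<in> F \<Longrightarrow> y \<in> K \<Longrightarrow> z \<in> K \<Longrightarrow> (x, z) \<in> (rel F K)\<^sup>*"
  by (erule rtrancl_into_rtrancl) (simp add: rel_def)

lemma rel_edge: "{y, z} \<in> F \<Longrightarrow> y \<in> K \<Longrightarrow> z \<in> K \<Longrightarrow> (y, z) \<in> (rel F K)\<^sup>*"
  by (rule r_into_rtrancl) (simp add: rel_def)

lemma rel_trans: "(x, y) \<in> (rel F K)\<^sup>* \<Longrightarrow> (y, z) \<in> (rel F K)\<^sup>* \<Longrightarrow> (x, z) \<in> (rel F K)\<^sup>*"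
  by (rule rtrancl_trans)

lemma path_exit:
  assumes "(x, y) \<in> (rel F K)\<^sup>*" "x \<in> M"
  shows "(x, y) \<in> (rel F (K \<inter> M))\<^sup>* \<or>
         (\<exists>a b. {a, b} \<in> F \<and> a \<in> K \<inter> M \<and> b \<in> K - M \<and> (x, a) \<in> (rel F (K \<inter> M))\<^sup>*)"
  using assms(1)
proof (induction rule: rtrancl_induct)
  case base then show ?case by simp
next
  case (step y z)
  from step.hyps(2) have e: "{y, z} \<in> F" "y \<in> K" "z \<in> K" by (auto simp: rel_def)
  show ?case
  proof (cases "(x, y) \<in> (rel F (K \<inter> M))\<^sup>*")
    case True' : True
    have yM: "y \<in> M" using rel_in[OF True'] assms(2) by auto
    show ?thesis
    proof (cases "z \<in> M")
      case True
      then show ?thesis using rel_step[OF True' e(1)] e yM by auto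
    next
      case False
      then show ?thesis using e yM True' by blast
    qed
  next
    case False
    then show ?thesis using step.IH by blast
  qed
qed

lemma connected_union:
  assumes "connected_in F X" "connected_in F Y" "z \<in> X" "z \<in> Y"
  shows "connected_in F (X \<union> Y)"
proof -
  have a: "(u, z) \<in> (rel F (X \<union> Y))\<^sup>*" if "u \<in> X \<union> Y" for u
    using that assms rel_mono[of X "X \<union> Y" F F] rel_mono[of Y "X \<union> Y" F F]
    unfolding connected_in_rel by blast
  show ?thesis unfolding connected_in_rel using a rel_sym rel_trans by metis
qed

lemma connected_Union:
  assumes "\<And>X. X \<in> A \<Longrightarrow> connected_in F X \<and> z \<in> X" "connected_in F Z" "z \<in> Z"
  shows "connected_in F (Z \<union> \<Union>A)"
proof -
  have a: "(u, z) \<in> (rel F (Z \<union> \<Union>A))\<^sup>*" if "u \<in> Z \<union> \<Union>A" for u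
  proof -
    from that consider "u \<in> Z" | X where "X \<in> A" "u \<in> X" by blast
    then show ?thesis
    proof cases
      case 1 then show ?thesis using assms(2,3) rel_mono[of Z "Z \<union> \<Union>A" F F]
        unfolding connected_in_rel by blast
    next
      case 2
      then have "(u, z) \<in> (rel F X)\<^sup>*" using assms(1) unfolding connected_in_rel by blast
      then show ?thesis using rel_mono[of X "Z \<union> \<Union>A" F F] 2 by blast
    qed
  qed
  show ?thesis unfolding connected_in_rel using a rel_sym rel_trans by metis
qed



lemma rel_insert_cases:
  assumes "(x, y) \<in> (rel (insert {a, b} F) N)\<^sup>*"
  shows "(x, y) \<in> (rel F N)\<^sup>* \<or> ((x, a) \<in> (rel F N)\<^sup>* \<and> (b, y) \<in> (rel F N)\<^sup>*)
         \<or> ((x, b) \<in> (rel F N)\<^sup>* \<and> (a, y) \<in> (rel F N)\<^sup>*)"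
  using assms
proof (induction rule: rtrancl_induct)
  case base then show ?case by simp
next
  case (step y z)
  from step.hyps(2) have yz: "{y, z} = {a, b} \<or> {y, z} \<in> F" "y \<in> N" "z \<in> N" by (auto simp: rel_def)
  show ?case
  proof (cases "{y, z} \<in> F")
    case True
    then have "(y, z) \<in> (rel F N)\<^sup>*" using yz rel_edge by metis
    then show ?thesis using step.IH rel_trans by metis
  next
    case False
    then have "{y, z} = {a, b}" using yz by blast
    then have "(y = a \<and> z = b) \<or> (y = b \<and> z = a)" by (metis doubleton_eq_iff)
    then show ?thesis using step.IH rel_trans rel_sym by (metis rtrancl.rtrancl_refl)
  qed
qed

lemma rel_insert_redundant:
  assumes "(x, y) \<in> (rel (insert {a, b} F) N)\<^sup>*" "(a, b) \<in> (rel F N)\<^sup>*"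
  shows "(x, y) \<in> (rel F N)\<^sup>*"
  using rel_insert_cases[OF assms(1)] assms(2) rel_trans rel_sym by metis

lemma reps_exist:
  assumes "finite F" "finite N" "\<forall>e\<in>F. card e = 2 \<and> e \<subseteq> N"
  shows "\<exists>R\<subseteq>N. card N \<le> card R + card F \<and> (\<forall>x\<in>N. \<exists>r\<in>R. (x, r) \<in> (rel F N)\<^sup>*)
           \<and> (\<forall>r\<in>R. \<forall>r'\<in>R. (r, r') \<in> (rel F N)\<^sup>* \<longrightarrow> r = r')"
  using assms(1,3)
proof (induction F rule: finite_induct)
  case empty
  have "rel {} N = {}" by (simp add: rel_def)
  then show ?case by (intro exI[of _ N]) auto
next
  case (insert e F)
  then obtain R where R: "R \<subseteq> N" "card N \<le> card R + card F"
      "\<forall>x\<in>N. \<exists>r\<in>R. (x, r) \<in> (rel F N)\<^sup>*"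
      "\<forall>r\<in>R. \<forall>r'\<in>R. (r, r') \<in> (rel F N)\<^sup>* \<longrightarrow> r = r'" by auto
  from insert.prems obtain a b where e: "e = {a, b}" "a \<noteq> b" "a \<in> N" "b \<in> N"
    unfolding card_2_iff by auto
  have cardI: "card (insert e F) = card F + 1" using insert by simp
  have mono: "(x, y) \<in> (rel F N)\<^sup>* \<Longrightarrow> (x, y) \<in> (rel (insert e F) N)\<^sup>*" for x y
    using rel_mono[of N N F "insert e F"] by blast
  show ?case
  proof (cases "(a, b) \<in> (rel F N)\<^sup>*")
    case True
    have "\<forall>r\<in>R. \<forall>r'\<in>R. (r, r') \<in> (rel (insert e F) N)\<^sup>* \<longrightarrow> r = r'"
      using R(4) rel_insert_redundant[OF _ True] unfolding e(1) by blast
    moreover have "\<forall>x\<in>N. \<exists>r\<in>R. (x, r) \<in> (rel (insert e F) N)\<^sup>*" using R(3) mono by blast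
    moreover have "card N \<le> card R + card (insert e F)" using R(2) cardI by linarith
    ultimately show ?thesis using R(1) by blast
  next
    case False
    obtain ra where ra: "ra \<in> R" "(a, ra) \<in> (rel F N)\<^sup>*" using R(3) e(3) by blast
    obtain rb where rb: "rb \<in> R" "(b, rb) \<in> (rel F N)\<^sup>*" using R(3) e(4) by blast
    have "ra \<noteq> rb"
    proof
      assume eq: "ra = rb"
      have "(a, b) \<in> (rel F N)\<^sup>*" using rel_trans[OF ra(2)[unfolded eq] rel_sym[OF rb(2)]] .
      then show False using False by simp
    qed
    have fin: "finite R" using R(1) assms(2) finite_subset by blast
    have c1: "card N \<le> card (R - {rb}) + card (insert e F)"
    proof -
      have "card (R - {rb}) = card R - 1" using card_Diff_singleton[OF rb(1)] .
      moreover have "card R > 0" using fin rb(1) card_gt_0_iff by blast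
      ultimately show ?thesis using R(2) cardI by linarith
    qed
    have ab: "(a, b) \<in> (rel (insert e F) N)\<^sup>*" using e rel_edge by (metis insertI1)
    have c2: "\<forall>x\<in>N. \<exists>r\<in>R - {rb}. (x, r) \<in> (rel (insert e F) N)\<^sup>*"
    proof
      fix x assume "x \<in> N"
      then obtain r where r: "r \<in> R" "(x, r) \<in> (rel F N)\<^sup>*" using R(3) by blast
      show "\<exists>r\<in>R - {rb}. (x, r) \<in> (rel (insert e F) N)\<^sup>*"
      proof (cases "r = rb")
        case True
        have "(x, b) \<in> (rel (insert e F) N)\<^sup>*"
          using rel_trans[OF mono[OF r(2)[unfolded True]] rel_sym[OF mono[OF rb(2)]]] .
        then have "(x, a) \<in> (rel (insert e F) N)\<^sup>*"
          using rel_trans[OF _ rel_sym[OF ab]] by blast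
        then have "(x, ra) \<in> (rel (insert e F) N)\<^sup>*"
          using rel_trans[OF _ mono[OF ra(2)]] by blast
        then show ?thesis using ra(1) \<open>ra \<noteq> rb\<close> by blast
      next
        case False
        then show ?thesis using r mono by blast
      qed
    qed
    have c3: "\<forall>r\<in>R - {rb}. \<forall>r'\<in>R - {rb}. (r, r') \<in> (rel (insert e F) N)\<^sup>* \<longrightarrow> r = r'"
    proof (intro ballI impI)
      fix r r' assume rr: "r \<in> R - {rb}" "r' \<in> R - {rb}" "(r, r') \<in> (rel (insert e F) N)\<^sup>*"
      from rel_insert_cases[OF rr(3)[unfolded e(1)]]
      consider "(r, r') \<in> (rel F N)\<^sup>*" | "(r, a) \<in> (rel F N)\<^sup>*" "(b, r') \<in> (rel F N)\<^sup>*"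
        | "(r, b) \<in> (rel F N)\<^sup>*" "(a, r') \<in> (rel F N)\<^sup>*" by blast
      then show "r = r'"
      proof cases
        case 1 then show ?thesis using R(4) rr by blast
      next
        case 2
        have "(rb, r') \<in> (rel F N)\<^sup>*" using rel_trans[OF rel_sym[OF rb(2)] 2(2)] .
        then have "rb = r'" using R(4) rr rb by blast
        then show ?thesis using rr by blast
      next
        case 3
        have "(r, rb) \<in> (rel F N)\<^sup>*" using rel_trans[OF 3(1) rb(2)] .
        then have "rb = r" using R(4) rr rb by blast
        then show ?thesis using rr by blast
      qed
    qed
    show ?thesis using c1 c2 c3 R(1) by (intro exI[of _ "R - {rb}"]) auto
  qed
qed

lemma connected_card:
  assumes "finite F" "finite N" "\<forall>e\<in>F. card e = 2 \<and> e \<subseteq> N" "connected_in F N" "N \<noteq> {}"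
  shows "card N \<le> card F + 1"
proof -
  obtain R where R: "R \<subseteq> N" "card N \<le> card R + card F" "\<forall>x\<in>N. \<exists>r\<in>R. (x, r) \<in> (rel F N)\<^sup>*"
      "\<forall>r\<in>R. \<forall>r'\<in>R. (r, r') \<in> (rel F N)\<^sup>* \<longrightarrow> r = r'"
    using reps_exist[OF assms(1-3)] by blast
  have "\<forall>r\<in>R. \<forall>r'\<in>R. r = r'" using R(1,4) assms(4) unfolding connected_in_rel by blast
  moreover have "finite R" using R(1) assms(2) finite_subset by blast
  ultimately have "card R \<le> 1" using card_le_Suc0_iff_eq[of R] by simp
  then show ?thesis using R(2) by linarith
qed

lemma tree_unique_edge:
  assumes T: "tree N F"
    and XY: "X \<subseteq> N" "Y \<subseteq> N" "X \<inter> Y = {}" "connected_in F X" "connected_in F Y"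
    and e: "{a, b} \<in> F" "a \<in> X" "b \<in> Y"
    and e': "{a', b'} \<in> F" "a' \<in> X" "b' \<in> Y"
  shows "a = a' \<and> b = b'"
proof (rule ccontr)
  assume neq: "\<not> (a = a' \<and> b = b')"
  have ne: "{a, b} \<noteq> {a', b'}"
  proof
    assume "{a, b} = {a', b'}"
    then have "(a = a' \<and> b = b') \<or> (a = b' \<and> b = a')" by (simp add: doubleton_eq_iff)
    then show False using neq e e' XY(3) by blast
  qed
  let ?F' = "F - {{a, b}}"
  from T have g: "graph N F" "N \<noteq> {}" "connected_in F N" "card F = card N - 1"
    unfolding tree_def by auto
  have finN: "finite N" using g(1) unfolding graph_def by auto
  have "F \<subseteq> Pow N" using g(1) unfolding graph_def by auto
  then have finF: "finite F" by (rule finite_subset) (simp add: finN)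
  have sub: "(x, y) \<in> (rel F Z)\<^sup>* \<Longrightarrow> Z \<subseteq> N \<Longrightarrow> (b \<notin> Z \<or> a \<notin> Z) \<Longrightarrow> (x, y) \<in> (rel ?F' N)\<^sup>*" for x y Z
  proof -
    assume "Z \<subseteq> N" "b \<notin> Z \<or> a \<notin> Z"
    then have "rel F Z \<subseteq> rel ?F' N" unfolding rel_def by (auto simp: doubleton_eq_iff)
    then show "(x, y) \<in> (rel F Z)\<^sup>* \<Longrightarrow> (x, y) \<in> (rel ?F' N)\<^sup>*" using rtrancl_mono by blast
  qed
  have "b \<notin> X" "a \<notin> Y" using e XY(3) by auto
  have "(a, a') \<in> (rel F X)\<^sup>*" using XY(4) e(2) e'(2) unfolding connected_in_rel by blast
  then have "(a, a') \<in> (rel ?F' N)\<^sup>*" using sub XY(1) \<open>b \<notin> X\<close> by blast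
  moreover have "(a', b') \<in> (rel ?F' N)\<^sup>*" using e' ne XY by (intro rel_edge) auto
  moreover have "(b', b) \<in> (rel F Y)\<^sup>*" using XY(5) e(3) e'(3) unfolding connected_in_rel by blast
  moreover have "(b', b) \<in> (rel ?F' N)\<^sup>*" using sub[OF calculation(3) XY(2)] \<open>a \<notin> Y\<close> by blast
  ultimately have ab: "(a, b) \<in> (rel ?F' N)\<^sup>*" by (meson rel_trans)
  have FF: "insert {a, b} ?F' = F" using e by blast
  have "connected_in ?F' N" unfolding connected_in_rel
  proof (intro ballI)
    fix u v assume "u \<in> N" "v \<in> N"
    then have "(u, v) \<in> (rel (insert {a, b} ?F') N)\<^sup>*" using g(3) FF unfolding connected_in_rel by simp
    then show "(u, v) \<in> (rel ?F' N)\<^sup>*" using rel_insert_redundant[OF _ ab] by blast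
  qed
  moreover have "\<forall>e\<in>?F'. card e = 2 \<and> e \<subseteq> N" using g(1) unfolding graph_def by auto
  ultimately have "card N \<le> card ?F' + 1" using connected_card[of ?F' N] finF finN g(2) by blast
  moreover have "card ?F' = card F - 1" using e finF by simp
  moreover have "card N > 0" using finN g(2) by auto
  moreover have "card F > 0" using e finF card_gt_0_iff by blast
  ultimately show False using g(4) by linarith
qed



definition contig :: "'b \<Rightarrow> 'b set list \<Rightarrow> bool" where
  "contig x L \<longleftrightarrow> (\<forall>i j k. i \<le> j \<and> j \<le> k \<and> k < length L \<and> x \<in> L ! i \<and> x \<in> L ! k \<longrightarrow> x \<in> L ! j)"

definition npd :: "'b set \<Rightarrow> 'b set set \<Rightarrow> 'b set list \<Rightarrow> bool" where
  "npd Y F L \<longleftrightarrow> L \<noteq> [] \<and> (\<forall>X\<in>set L. X \<subseteq> Y) \<and> (\<forall>x\<in>Y. \<exists>X\<in>set L. x \<in> X) \<and>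
     (\<forall>x y. {x, y} \<in> F \<longrightarrow> x \<in> Y \<longrightarrow> y \<in> Y \<longrightarrow> (\<exists>X\<in>set L. x \<in> X \<and> y \<in> X)) \<and> (\<forall>x. contig x L)"

lemma contig_map:
  assumes "contig x L" "\<And>j. j < length L' \<Longrightarrow> (x \<in> L' ! j \<longleftrightarrow> x \<in> L ! (g j))"
    "\<And>i j. i \<le> j \<Longrightarrow> g i \<le> g j" "\<And>j. j < length L' \<Longrightarrow> g j < length L"
  shows "contig x L'"
  unfolding contig_def
proof (intro allI impI)
  fix i j k assume h: "i \<le> j \<and> j \<le> k \<and> k < length L' \<and> x \<in> L' ! i \<and> x \<in> L' ! k"
  then have "g i \<le> g j" "g j \<le> g k" "g k < length L" "x \<in> L ! g i" "x \<in> L ! g k"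
    using assms(2-4) by auto
  then have "x \<in> L ! g j" using assms(1) unfolding contig_def by blast
  then show "x \<in> L' ! j" using assms(2) h by auto
qed

lemma nth_ins:
  "(L1 @ H # Q @ L2) ! j = (if j < length L1 then L1 ! j else if j = length L1 then H
     else if j \<le> length L1 + length Q then Q ! (j - length L1 - 1) else L2 ! (j - length L1 - length Q - 1))"
  by (auto simp: nth_append nth_Cons' not_less)

lemma nth_ins0:
  "(L1 @ H # L2) ! j = (if j < length L1 then L1 ! j else if j = length L1 then H
     else L2 ! (j - length L1 - 1))"
  by (auto simp: nth_append nth_Cons' not_less)

lemma contig_insert:
  assumes c: "contig x (L1 @ H # L2)" "contig x P"
    and disj: "x \<in> \<Union>(set P) \<Longrightarrow> x \<notin> \<Union>(set (L1 @ H # L2))"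
  shows "contig x (L1 @ H # map ((\<union>) H) P @ L2)"
proof (cases "x \<in> \<Union>(set P)")
  case False
  let ?L = "L1 @ H # L2" and ?L' = "L1 @ H # map ((\<union>) H) P @ L2"
  let ?n = "length L1" and ?m = "length P"
  define g where "g j = (if j \<le> ?n then j else if j \<le> ?n + ?m then ?n else j - ?m)" for j
  show ?thesis
  proof (rule contig_map[OF c(1), of _ g])
    fix j assume j: "j < length ?L'"
    show "(x \<in> ?L' ! j) = (x \<in> ?L ! g j)"
    proof -
      have "x \<notin> P ! (j - ?n - 1)" if "j > ?n" "j \<le> ?n + ?m"
        using False that nth_mem[of "j - ?n - 1" P] by auto
      moreover have "j - ?m - ?n - 1 = j - ?n - ?m - 1" by simp
      ultimately show ?thesis using j unfolding nth_ins[of L1 H "map ((\<union>) H) P" L2] nth_ins0 g_def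
        by (auto simp: nth_append)
    qed
  next
    fix i j :: nat assume "i \<le> j" then show "g i \<le> g j" unfolding g_def by auto
  next
    fix j assume "j < length ?L'" then show "g j < length ?L" unfolding g_def by auto
  qed
next
  case True
  then have nx: "x \<notin> X" if "X \<in> set (L1 @ H # L2)" for X using disj that by blast
  let ?L' = "L1 @ H # map ((\<union>) H) P @ L2"
  let ?n = "length L1" and ?m = "length P"
  have mem: "x \<in> ?L' ! j \<longleftrightarrow> (?n < j \<and> j \<le> ?n + ?m \<and> x \<in> P ! (j - ?n - 1))" if "j < length ?L'" for j
  proof -
    have "L1 ! j \<in> set (L1 @ H # L2)" if "j < ?n" using that by auto
    moreover have "L2 ! (j - ?n - ?m - 1) \<in> set (L1 @ H # L2)" if "\<not> j \<le> ?n + ?m" "j < length ?L'"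
      using that by auto
    ultimately show ?thesis using nx \<open>j < length ?L'\<close> unfolding nth_ins[of L1 H "map ((\<union>) H) P" L2]
      by (auto simp: nth_append)
  qed
  show ?thesis unfolding contig_def
  proof (intro allI impI)
    fix i j k assume h: "i \<le> j \<and> j \<le> k \<and> k < length ?L' \<and> x \<in> ?L' ! i \<and> x \<in> ?L' ! k"
    then have a: "?n < i" "i \<le> ?n + ?m" "x \<in> P ! (i - ?n - 1)" "?n < k" "k \<le> ?n + ?m" "x \<in> P ! (k - ?n - 1)"
      using mem[of i] mem[of k] by auto
    moreover have "i - ?n - 1 \<le> j - ?n - 1" "j - ?n - 1 \<le> k - ?n - 1" "k - ?n - 1 < length P"
      using a h by auto
    ultimately have "x \<in> P ! (j - ?n - 1)"
      using c(2)[unfolded contig_def, rule_format, of "i - ?n - 1" "j - ?n - 1" "k - ?n - 1"] by blast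
    then show "x \<in> ?L' ! j" using mem[of j] a h by auto
  qed
qed



lemma npd_insert:
  assumes L: "npd Y F (L1 @ H # L2)" and P: "npd D F P" and disj: "Y \<inter> D = {}" and a: "a \<in> H"
    and att: "\<forall>x y. {x, y} \<in> F \<longrightarrow> x \<in> Y \<longrightarrow> y \<in> D \<longrightarrow> x = a"
  shows "npd (Y \<union> D) F (L1 @ H # map ((\<union>) H) P @ L2)"
proof -
  let ?L = "L1 @ H # L2" and ?L' = "L1 @ H # map ((\<union>) H) P @ L2"
  have setL': "set ?L' = set ?L \<union> (\<union>) H ` set P" by auto
  have LY: "\<forall>X\<in>set ?L. X \<subseteq> Y" and PD: "\<forall>X\<in>set P. X \<subseteq> D" using L P unfolding npd_def by auto
  have HY: "H \<subseteq> Y" using LY by simp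
  have c1: "\<forall>X\<in>set ?L'. X \<subseteq> Y \<union> D" using LY PD HY unfolding setL' by blast
  have c2: "\<forall>x\<in>Y \<union> D. \<exists>X\<in>set ?L'. x \<in> X"
  proof
    fix x assume "x \<in> Y \<union> D"
    then consider "x \<in> Y" | "x \<in> D" by blast
    then show "\<exists>X\<in>set ?L'. x \<in> X"
    proof cases
      case 1 then obtain X where "X \<in> set ?L" "x \<in> X" using L unfolding npd_def by blast
      then show ?thesis unfolding setL' by blast
    next
      case 2 then obtain X where "X \<in> set P" "x \<in> X" using P unfolding npd_def by blast
      then show ?thesis unfolding setL' by blast
    qed
  qed
  have mixed: "\<exists>X\<in>set ?L'. x \<in> X \<and> y \<in> X" if h: "{x, y} \<in> F" "x \<in> Y" "y \<in> D" for x y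
  proof -
    have "x = a" using att h by blast
    obtain X where "X \<in> set P" "y \<in> X" using P h(3) unfolding npd_def by blast
    then show ?thesis using \<open>x = a\<close> a unfolding setL' by blast
  qed
  have c3: "\<forall>x y. {x, y} \<in> F \<longrightarrow> x \<in> Y \<union> D \<longrightarrow> y \<in> Y \<union> D \<longrightarrow> (\<exists>X\<in>set ?L'. x \<in> X \<and> y \<in> X)"
  proof (intro allI impI)
    fix x y assume e: "{x, y} \<in> F" "x \<in> Y \<union> D" "y \<in> Y \<union> D"
    have e': "{y, x} \<in> F" using e(1) by (simp add: insert_commute)
    consider "x \<in> Y" "y \<in> Y" | "x \<in> D" "y \<in> D" | "x \<in> Y" "y \<in> D" | "x \<in> D" "y \<in> Y"
      using e by blast
    then show "\<exists>X\<in>set ?L'. x \<in> X \<and> y \<in> X"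
    proof cases
      case 1 then obtain X where "X \<in> set ?L" "x \<in> X" "y \<in> X" using L e(1) unfolding npd_def by blast
      then show ?thesis unfolding setL' by blast
    next
      case 2 then obtain X where "X \<in> set P" "x \<in> X" "y \<in> X" using P e(1) unfolding npd_def by blast
      then show ?thesis unfolding setL' by blast
    next
      case 3 then show ?thesis using mixed e(1) by blast
    next
      case 4 then show ?thesis using mixed[OF e'] by blast
    qed
  qed
  have c4: "\<forall>x. contig x ?L'"
  proof
    fix x
    have "x \<in> \<Union>(set P) \<Longrightarrow> x \<notin> \<Union>(set ?L)" using PD LY disj by blast
    then show "contig x ?L'" using contig_insert[of x L1 H L2 P] L P unfolding npd_def by blast
  qed
  show ?thesis unfolding npd_def using c1 c2 c3 c4 by simp
qed

lemma npd_insert_many: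
  fixes Ds :: "'b set list" and PP :: "'b set \<Rightarrow> 'b set list" and att :: "'b set \<Rightarrow> 'b"
  assumes Z: "npd X F Z"
    and Ds: "\<forall>D\<in>set Ds. npd D F (PP D) \<and> D \<inter> X = {} \<and> att D \<in> X \<and>
               (\<forall>x y. {x, y} \<in> F \<longrightarrow> x \<in> X \<longrightarrow> y \<in> D \<longrightarrow> x = att D)"
    and dj: "\<forall>D\<in>set Ds. \<forall>D'\<in>set Ds. D \<noteq> D' \<longrightarrow> D \<inter> D' = {} \<and> (\<forall>x y. {x, y} \<in> F \<longrightarrow> x \<in> D' \<longrightarrow> y \<in> D \<longrightarrow> False)"
    and dist: "distinct Ds"
  shows "\<exists>L. npd (X \<union> \<Union>(set Ds)) F L \<and> set Z \<subseteq> set L \<and>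
     (\<forall>Y\<in>set L. Y \<in> set Z \<or> (\<exists>D\<in>set Ds. \<exists>H\<in>set Z. \<exists>Q\<in>set (PP D). att D \<in> H \<and> Y = H \<union> Q))"
  using Ds dj dist
proof (induction Ds)
  case Nil
  then show ?case using Z by (intro exI[of _ Z]) auto
next
  case (Cons D Ds)
  have p1: "\<forall>D\<in>set Ds. npd D F (PP D) \<and> D \<inter> X = {} \<and> att D \<in> X \<and>
               (\<forall>x y. {x, y} \<in> F \<longrightarrow> x \<in> X \<longrightarrow> y \<in> D \<longrightarrow> x = att D)"
    using Cons.prems(1) by simp
  have p2: "\<forall>D\<in>set Ds. \<forall>D'\<in>set Ds. D \<noteq> D' \<longrightarrow> D \<inter> D' = {} \<and> (\<forall>x y. {x, y} \<in> F \<longrightarrow> x \<in> D' \<longrightarrow> y \<in> D \<longrightarrow> False)"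
    using Cons.prems(2) by simp
  have p3: "distinct Ds" using Cons.prems(3) by simp
  obtain L where L: "npd (X \<union> \<Union>(set Ds)) F L" "set Z \<subseteq> set L"
    "\<forall>Y\<in>set L. Y \<in> set Z \<or> (\<exists>D\<in>set Ds. \<exists>H\<in>set Z. \<exists>Q\<in>set (PP D). att D \<in> H \<and> Y = H \<union> Q)"
    using Cons.IH[OF p1 p2 p3] by blast
  have D: "npd D F (PP D)" "D \<inter> X = {}" "att D \<in> X"
    "\<forall>x y. {x, y} \<in> F \<longrightarrow> x \<in> X \<longrightarrow> y \<in> D \<longrightarrow> x = att D"
    using Cons.prems(1) by auto
  obtain H where H: "H \<in> set Z" "att D \<in> H" using Z D(3) unfolding npd_def by blast
  then have "H \<in> set L" using L(2) by blast
  then obtain L1 L2 where LL: "L = L1 @ H # L2" using split_list by metis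
  have nD: "D \<notin> set Ds" using Cons.prems(3) by simp
  have disj: "(X \<union> \<Union>(set Ds)) \<inter> D = {}"
  proof -
    have "D' \<inter> D = {}" if "D' \<in> set Ds" for D'
    proof -
      have "D' \<in> set (D # Ds)" "D \<in> set (D # Ds)" "D \<noteq> D'" using that nD by auto
      then show ?thesis using Cons.prems(2) by blast
    qed
    then show ?thesis using D(2) by blast
  qed
  have att: "\<forall>x y. {x, y} \<in> F \<longrightarrow> x \<in> X \<union> \<Union>(set Ds) \<longrightarrow> y \<in> D \<longrightarrow> x = att D"
  proof (intro allI impI)
    fix x y assume e: "{x, y} \<in> F" "x \<in> X \<union> \<Union>(set Ds)" "y \<in> D"
    show "x = att D"
    proof (cases "x \<in> X")
      case True then show ?thesis using D(4) e by blast
    next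
      case False
      then obtain D' where "D' \<in> set Ds" "x \<in> D'" using e by blast
      moreover have "D' \<in> set (D # Ds)" "D \<in> set (D # Ds)" "D \<noteq> D'" using \<open>D' \<in> set Ds\<close> nD by auto
      ultimately have False using Cons.prems(2) e by blast
      then show ?thesis ..
    qed
  qed
  have new: "npd ((X \<union> \<Union>(set Ds)) \<union> D) F (L1 @ H # map ((\<union>) H) (PP D) @ L2)"
    using npd_insert[OF L(1)[unfolded LL] D(1) disj H(2) att] .
  show ?case
  proof (intro exI conjI)
    show "npd (X \<union> \<Union>(set (D # Ds))) F (L1 @ H # map ((\<union>) H) (PP D) @ L2)"
      using new by (simp add: Un_ac)
    show "set Z \<subseteq> set (L1 @ H # map ((\<union>) H) (PP D) @ L2)" using L(2) LL by auto
    show "\<forall>Y\<in>set (L1 @ H # map ((\<union>) H) (PP D) @ L2). Y \<in> set Z \<or>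
       (\<exists>D'\<in>set (D # Ds). \<exists>H'\<in>set Z. \<exists>Q\<in>set (PP D'). att D' \<in> H' \<and> Y = H' \<union> Q)"
    proof
      fix Y assume "Y \<in> set (L1 @ H # map ((\<union>) H) (PP D) @ L2)"
      then consider "Y \<in> set L" | Q where "Q \<in> set (PP D)" "Y = H \<union> Q" using LL by auto
      then show "Y \<in> set Z \<or> (\<exists>D'\<in>set (D # Ds). \<exists>H'\<in>set Z. \<exists>Q\<in>set (PP D'). att D' \<in> H' \<and> Y = H' \<union> Q)"
      proof cases
        case 1 then show ?thesis using L(3) by auto
      next
        case 2 then show ?thesis using H by auto
      qed
    qed
  qed
qed



definition tcomp :: "'b set set \<Rightarrow> 'b set \<Rightarrow> 'b \<Rightarrow> 'b set" where
  "tcomp F K x = {y \<in> K. (x, y) \<in> (rel F K)\<^sup>*}"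

lemma comp_self: "x \<in> K \<Longrightarrow> x \<in> tcomp F K x"
  unfolding tcomp_def by simp

lemma comp_sub: "tcomp F K x \<subseteq> K"
  unfolding tcomp_def by auto

lemma path_in_comp:
  assumes "(x, y) \<in> (rel F K)\<^sup>*" "x \<in> K"
  shows "(x, y) \<in> (rel F (tcomp F K x))\<^sup>*"
  using assms(1)
proof (induction rule: rtrancl_induct)
  case base then show ?case by simp
next
  case (step y z)
  then have yz: "{y, z} \<in> F" "y \<in> K" "z \<in> K" by (auto simp: rel_def)
  have "(x, y) \<in> (rel F K)\<^sup>*" using step.hyps(1) .
  then have "y \<in> tcomp F K x" "z \<in> tcomp F K x" using yz step.hyps unfolding tcomp_def by auto
  then show ?case using rel_step[OF step.IH yz(1)] by blast
qed

lemma comp_connected: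
  assumes x: "x \<in> K" shows "connected_in F (tcomp F K x)"
  unfolding connected_in_rel
proof (intro ballI)
  fix u v assume u: "u \<in> tcomp F K x" and v: "v \<in> tcomp F K x"
  have a: "(x, u) \<in> (rel F K)\<^sup>*" using u by (simp add: tcomp_def)
  have b: "(x, v) \<in> (rel F K)\<^sup>*" using v by (simp add: tcomp_def)
  have a': "(x, u) \<in> (rel F (tcomp F K x))\<^sup>*" using path_in_comp[OF a x] .
  have b': "(x, v) \<in> (rel F (tcomp F K x))\<^sup>*" using path_in_comp[OF b x] .
  show "(u, v) \<in> (rel F (tcomp F K x))\<^sup>*" using rel_trans[OF rel_sym[OF a'] b'] .
qed

lemma comp_eq: "y \<in> tcomp F K x \<Longrightarrow> tcomp F K y = tcomp F K x"
proof -
  assume "y \<in> tcomp F K x"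
  then have xy: "(x, y) \<in> (rel F K)\<^sup>*" by (simp add: tcomp_def)
  have yx: "(y, x) \<in> (rel F K)\<^sup>*" using rel_sym[OF xy] .
  show ?thesis
  proof (intro set_eqI iffI)
    fix z assume "z \<in> tcomp F K y"
    then show "z \<in> tcomp F K x" using rel_trans[OF xy] by (simp add: tcomp_def)
  next
    fix z assume "z \<in> tcomp F K x"
    then show "z \<in> tcomp F K y" using rel_trans[OF yx] by (simp add: tcomp_def)
  qed
qed

lemma comp_disj: "tcomp F K x \<noteq> tcomp F K y \<Longrightarrow> tcomp F K x \<inter> tcomp F K y = {}"
proof (rule ccontr)
  assume "tcomp F K x \<noteq> tcomp F K y" "tcomp F K x \<inter> tcomp F K y \<noteq> {}"
  then obtain z where "z \<in> tcomp F K x" "z \<in> tcomp F K y" by blast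
  then have "tcomp F K z = tcomp F K x" "tcomp F K z = tcomp F K y" using comp_eq by metis+
  then show False using \<open>tcomp F K x \<noteq> tcomp F K y\<close> by simp
qed

lemma comp_edge: "{a, b} \<in> F \<Longrightarrow> a \<in> tcomp F K x \<Longrightarrow> b \<in> K \<Longrightarrow> b \<in> tcomp F K x"
proof -
  assume h: "{a, b} \<in> F" "a \<in> tcomp F K x" "b \<in> K"
  then have xa: "(x, a) \<in> (rel F K)\<^sup>*" and aK: "a \<in> K" unfolding tcomp_def by auto
  have "(x, b) \<in> (rel F K)\<^sup>*" using rel_step[OF xa h(1) aK h(3)] .
  then show ?thesis using h(3) unfolding tcomp_def by simp
qed

lemma comps_Union: "\<Union>(tcomp F K ` K) = K"
proof
  show "\<Union>(tcomp F K ` K) \<subseteq> K" by (rule UN_least) (rule comp_sub)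
  show "K \<subseteq> \<Union>(tcomp F K ` K)" using comp_self by fastforce
qed

lemma comp_attach:
  assumes A: "connected_in F A" and z: "z \<in> A \<inter> X" and d: "d \<in> A - X"
  shows "\<exists>x y. {x, y} \<in> F \<and> x \<in> X \<and> x \<in> A \<and> y \<in> tcomp F (A - X) d"
proof -
  let ?D = "tcomp F (A - X) d"
  have dD: "d \<in> ?D" using comp_self d .
  have "(d, z) \<in> (rel F A)\<^sup>*" using A z d unfolding connected_in_rel by blast
  from path_exit[OF this dD]
  consider "(d, z) \<in> (rel F (A \<inter> ?D))\<^sup>*"
    | a b where "{a, b} \<in> F" "a \<in> A \<inter> ?D" "b \<in> A - ?D" by blast
  then show ?thesis
  proof cases
    case 1
    from rel_in[OF this] have "z \<in> ?D" using dD by auto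
    moreover have "?D \<subseteq> A - X" by (rule comp_sub)
    ultimately have False using z by blast
    then show ?thesis ..
  next
    case 2
    have "b \<in> X"
    proof (rule ccontr)
      assume "b \<notin> X"
      then have "b \<in> A - X" using 2(3) by blast
      moreover have "a \<in> ?D" using 2(2) by blast
      ultimately have "b \<in> ?D" using comp_edge[OF 2(1)] by blast
      then show False using 2 by blast
    qed
    moreover have "{b, a} \<in> F" using 2(1) by (simp add: insert_commute)
    ultimately show ?thesis using 2 by blast
  qed
qed

lemma npdD:
  assumes "npd Y F L"
  shows "L \<noteq> []" "\<And>X. X \<in> set L \<Longrightarrow> X \<subseteq> Y" "\<And>x. x \<in> Y \<Longrightarrow> \<exists>X\<in>set L. x \<in> X"
    "\<And>x y. {x, y} \<in> F \<Longrightarrow> x \<in> Y \<Longrightarrow> y \<in> Y \<Longrightarrow> \<exists>X\<in>set L. x \<in> X \<and> y \<in> X"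
    "\<And>x. contig x L"
  using assms unfolding npd_def by auto

lemma npdI:
  assumes "L \<noteq> []" "\<And>X. X \<in> set L \<Longrightarrow> X \<subseteq> Y" "\<And>x. x \<in> Y \<Longrightarrow> \<exists>X\<in>set L. x \<in> X"
    "\<And>x y. {x, y} \<in> F \<Longrightarrow> x \<in> Y \<Longrightarrow> y \<in> Y \<Longrightarrow> \<exists>X\<in>set L. x \<in> X \<and> y \<in> X"
    "\<And>x. contig x L"
  shows "npd Y F L"
  using assms unfolding npd_def by auto

lemma npd_restrict:
  assumes "npd A F P" "D \<subseteq> A"
  shows "npd D F (map (\<lambda>X. X \<inter> D) P)"
proof -
  have c: "contig x (map (\<lambda>X. X \<inter> D) P)" for x
  proof (cases "x \<in> D")
    case True
    have "contig x P" using npdD(5)[OF assms(1)] .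
    then show ?thesis
    proof (rule contig_map[where g = id])
      fix j assume "j < length (map (\<lambda>X. X \<inter> D) P)"
      then show "(x \<in> map (\<lambda>X. X \<inter> D) P ! j) = (x \<in> P ! id j)" using True by simp
    qed auto
  next
    case False
    then show ?thesis unfolding contig_def by simp
  qed
  have e: "\<exists>X\<in>set (map (\<lambda>X. X \<inter> D) P). x \<in> X \<and> y \<in> X"
    if h: "{x, y} \<in> F" "x \<in> D" "y \<in> D" for x y
  proof -
    have "x \<in> A" "y \<in> A" using h assms(2) by auto
    then obtain X where "X \<in> set P" "x \<in> X" "y \<in> X" using npdD(4)[OF assms(1) h(1)] by blast
    then show ?thesis using h by auto
  qed
  have cov: "\<exists>X\<in>set (map (\<lambda>X. X \<inter> D) P). x \<in> X" if h: "x \<in> D" for x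
  proof -
    have "x \<in> A" using h assms(2) by auto
    then obtain X where "X \<in> set P" "x \<in> X" using npdD(3)[OF assms(1)] by blast
    then show ?thesis using h by auto
  qed
  have "P \<noteq> []" using npdD(1)[OF assms(1)] .
  then show ?thesis using c e cov by (intro npdI) auto
qed

lemma npd_union:
  assumes T: "tree N F" and sub: "X \<subseteq> N" "A \<subseteq> N" and con: "connected_in F X" "connected_in F A"
    and meet: "X \<inter> A \<noteq> {}" and Z: "npd X F Z" and P: "npd A F P"
    and bk: "\<forall>Y\<in>set Z. card Y \<le> k" and bq: "\<forall>Y\<in>set P. card Y \<le> q"
  shows "\<exists>L. npd (X \<union> A) F L \<and> (\<forall>Y\<in>set L. card Y \<le> k + q)"
proof -
  have finN: "finite N" using T unfolding tree_def graph_def by auto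
  let ?K = "A - X"
  let ?att = "\<lambda>D. SOME x. x \<in> X \<and> (\<exists>y\<in>D. {x, y} \<in> F)"
  let ?PP = "\<lambda>D. map (\<lambda>Y. Y \<inter> D) P"
  have finA: "finite A" using finN sub(2) finite_subset by blast
  have finC: "finite (tcomp F ?K ` ?K)" using finA by simp
  obtain Ds where Ds: "set Ds = tcomp F ?K ` ?K" "distinct Ds" using finite_distinct_list[OF finC] by blast
  obtain z where z: "z \<in> A \<inter> X" using meet by blast
  have props: "npd D F (?PP D) \<and> D \<inter> X = {} \<and> ?att D \<in> X \<and>
               (\<forall>x y. {x, y} \<in> F \<longrightarrow> x \<in> X \<longrightarrow> y \<in> D \<longrightarrow> x = ?att D)" if hD: "D \<in> set Ds" for D
  proof -
    obtain d where d: "d \<in> ?K" "D = tcomp F ?K d" using hD Ds by auto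
    have "D \<subseteq> A - X" using comp_sub[of F ?K d] d(2) by simp
    then have DA: "D \<subseteq> A" "D \<inter> X = {}" by blast+
    obtain x0 y0 where e0: "{x0, y0} \<in> F" "x0 \<in> X" "y0 \<in> D" using comp_attach[OF con(2) z d(1)] d by blast
    have ex: "\<exists>x. x \<in> X \<and> (\<exists>y\<in>D. {x, y} \<in> F)" using e0 by blast
    have attX: "?att D \<in> X" "\<exists>y\<in>D. {?att D, y} \<in> F" using someI_ex[OF ex] by blast+
    have Dcon: "connected_in F D" using comp_connected[OF d(1)] d(2) by simp
    have DN: "D \<subseteq> N" "X \<inter> D = {}" using DA sub(2) by blast+
    have uniq: "x = ?att D" if "{x, y} \<in> F" "x \<in> X" "y \<in> D" for x y
    proof -
      obtain y1 where "y1 \<in> D" "{?att D, y1} \<in> F" using attX by blast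
      then show ?thesis using tree_unique_edge[OF T sub(1) DN(1) DN(2) con(1) Dcon, of x y "?att D" y1] that attX(1)
        by blast
    qed
    show ?thesis using npd_restrict[OF P DA(1)] DA attX uniq by blast
  qed
  have dj: "\<forall>D\<in>set Ds. \<forall>D'\<in>set Ds. D \<noteq> D' \<longrightarrow> D \<inter> D' = {} \<and> (\<forall>x y. {x, y} \<in> F \<longrightarrow> x \<in> D' \<longrightarrow> y \<in> D \<longrightarrow> False)"
  proof (intro ballI impI conjI allI)
    fix D D' assume h: "D \<in> set Ds" "D' \<in> set Ds" "D \<noteq> D'"
    obtain d where d: "d \<in> ?K" "D = tcomp F ?K d" using h Ds by auto
    obtain d' where d': "d' \<in> ?K" "D' = tcomp F ?K d'" using h Ds by auto
    have ne: "tcomp F ?K d \<noteq> tcomp F ?K d'" using h d d' by simp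
    show "D \<inter> D' = {}" using comp_disj[OF ne] d d' by simp
    fix x y assume e: "{x, y} \<in> F" "x \<in> D'" "y \<in> D"
    have "y \<in> ?K" using e(3) d(2) comp_sub[of F ?K d] by blast
    then have "y \<in> D'" using comp_edge[of x y F ?K d'] d'(2) e by blast
    then show False using comp_disj[OF ne] d d' e by blast
  qed
  have props': "\<forall>D\<in>set Ds. npd D F (?PP D) \<and> D \<inter> X = {} \<and> ?att D \<in> X \<and>
               (\<forall>x y. {x, y} \<in> F \<longrightarrow> x \<in> X \<longrightarrow> y \<in> D \<longrightarrow> x = ?att D)"
    using props by blast
  obtain L where L: "npd (X \<union> \<Union>(set Ds)) F L"
     "\<forall>Y\<in>set L. Y \<in> set Z \<or> (\<exists>D\<in>set Ds. \<exists>H\<in>set Z. \<exists>Q\<in>set (?PP D). ?att D \<in> H \<and> Y = H \<union> Q)"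
    using npd_insert_many[OF Z props' dj Ds(2)] by blast
  have U: "X \<union> \<Union>(set Ds) = X \<union> A" using Ds(1) comps_Union[of F ?K] by auto
  have "card Y \<le> k + q" if "Y \<in> set L" for Y
  proof -
    from L(2) that consider "Y \<in> set Z" | D H Q where "H \<in> set Z" "Q \<in> set (?PP D)" "Y = H \<union> Q" by blast
    then show ?thesis
    proof cases
      case 1 then show ?thesis using bk by fastforce
    next
      case 2
      then obtain Q0 where Q0: "Q0 \<in> set P" "Q = Q0 \<inter> D" by auto
      have "Q0 \<subseteq> A" using npdD(2)[OF P Q0(1)] .
      then have "finite Q0" using finA finite_subset by blast
      then have "card Q \<le> q" using Q0 bq card_mono[of Q0 Q] by fastforce
      moreover have "card H \<le> k" using bk 2 by blast
      ultimately show ?thesis using 2(3) card_Un_le[of H Q] by simp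
    qed
  qed
  then show ?thesis using L(1) U by auto
qed



lemma pdD:
  assumes "path_decomposition V E Ps"
  shows "Ps \<noteq> []" "\<And>X. X \<in> set Ps \<Longrightarrow> X \<subseteq> V" "\<And>e. e \<in> E \<Longrightarrow> \<exists>X\<in>set Ps. e \<subseteq> X"
    "\<And>v. v \<in> V \<Longrightarrow> \<exists>X\<in>set Ps. v \<in> X"
    "\<And>v i j k. v \<in> V \<Longrightarrow> i \<le> j \<Longrightarrow> j \<le> k \<Longrightarrow> k < length Ps \<Longrightarrow> v \<in> Ps ! i \<Longrightarrow> v \<in> Ps ! k \<Longrightarrow> v \<in> Ps ! j"
  using assms unfolding path_decomposition_def by blast+

lemma pd_to_npd:
  assumes "path_decomposition Y {e \<in> F. e \<subseteq> Y} Ps"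
  shows "npd Y F Ps"
proof (rule npdI)
  show "Ps \<noteq> []" using pdD(1)[OF assms] .
  show "X \<subseteq> Y" if "X \<in> set Ps" for X using pdD(2)[OF assms that] .
  show "\<exists>X\<in>set Ps. x \<in> X" if "x \<in> Y" for x using pdD(4)[OF assms that] .
  show "\<exists>X\<in>set Ps. x \<in> X \<and> y \<in> X" if h: "{x, y} \<in> F" "x \<in> Y" "y \<in> Y" for x y
  proof -
    have "{x, y} \<in> {e \<in> F. e \<subseteq> Y}" using h by simp
    from pdD(3)[OF assms this] show ?thesis by simp
  qed
  show "contig x Ps" for x
  proof (cases "x \<in> Y")
    case True
    then show ?thesis unfolding contig_def using pdD(5)[OF assms True] by blast
  next
    case False
    then have "x \<notin> Ps ! i" if "i < length Ps" for i using pdD(2)[OF assms] that nth_mem by blast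
    then show ?thesis unfolding contig_def by auto
  qed
qed

locale lsetting =
  fixes V :: "'a set" and E :: "'a set set" and N :: "'b set" and F :: "'b set set"
    and B :: "'b \<Rightarrow> 'a set" and w p :: nat
  assumes G: "graph V E" and w1: "w \<ge> 1" and good: "good_tree_decomposition w p V E N F B"
begin

abbreviation Tv :: "'a \<Rightarrow> 'b set" where "Tv v \<equiv> {x \<in> N. v \<in> B x}"

lemma TD: "tree_decomposition V E N F B" using good unfolding good_tree_decomposition_def by blast
lemma T: "tree N F" using TD unfolding tree_decomposition_def by blast
lemma finN: "finite N" using T unfolding tree_def graph_def by blast
lemma finV: "finite V" using G unfolding graph_def by blast
lemma Bsub: "x \<in> N \<Longrightarrow> B x \<subseteq> V" using TD unfolding tree_decomposition_def by blast
lemma Bcard: "x \<in> N \<Longrightarrow> card (B x) \<le> w + 1" using good unfolding good_tree_decomposition_def by blast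
lemma Bfin: "x \<in> N \<Longrightarrow> finite (B x)" using Bsub finV finite_subset by blast
lemma Tv_con: "v \<in> V \<Longrightarrow> connected_in F (Tv v)" using TD unfolding tree_decomposition_def by blast
lemma Tv_ne: "v \<in> V \<Longrightarrow> Tv v \<noteq> {}" using TD unfolding tree_decomposition_def by blast
lemma Fedge: "{x, y} \<in> F \<Longrightarrow> x \<in> N \<and> y \<in> N" using T unfolding tree_def graph_def by blast

lemma Tv_pd: "v \<in> V \<Longrightarrow> \<exists>P. npd (Tv v) F P \<and> (\<forall>Y\<in>set P. card Y \<le> p + 1)"
proof -
  assume "v \<in> V"
  then have "pathwidth_le (fst (subtree_of N F B v)) (snd (subtree_of N F B v)) p"
    using good unfolding good_tree_decomposition_def by blast
  then obtain Ps where "path_decomposition (Tv v) {e \<in> F. e \<subseteq> Tv v} Ps" "\<forall>X\<in>set Ps. card X \<le> p + 1"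
    unfolding pathwidth_le_def subtree_of_def by auto
  then show ?thesis using pd_to_npd by blast
qed

lemma conn_inter:
  assumes u: "v \<in> V" "c \<in> Tv v" and C: "c \<in> C" and edge: "\<forall>x y. {x, y} \<in> F \<longrightarrow> x \<in> C \<longrightarrow> y \<notin> C \<longrightarrow> x = c"
  shows "connected_in F (Tv v \<inter> C)"
proof -
  have toc: "(x, c) \<in> (rel F (Tv v \<inter> C))\<^sup>*" if x: "x \<in> Tv v \<inter> C" for x
  proof -
    have "(x, c) \<in> (rel F (Tv v))\<^sup>*" using Tv_con[OF u(1)] x u(2) unfolding connected_in_rel by blast
    from path_exit[OF this, of C] x
    consider "(x, c) \<in> (rel F (Tv v \<inter> C))\<^sup>*"
      | a b where "{a, b} \<in> F" "a \<in> Tv v \<inter> C" "b \<in> Tv v - C" "(x, a) \<in> (rel F (Tv v \<inter> C))\<^sup>*" by blast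
    then show ?thesis
    proof cases
      case 1 then show ?thesis .
    next
      case 2
      then have "a = c" using edge by blast
      then show ?thesis using 2(4) by simp
    qed
  qed
  show ?thesis unfolding connected_in_rel
  proof (intro ballI)
    fix x y assume "x \<in> Tv v \<inter> C" "y \<in> Tv v \<inter> C"
    from toc[OF this(1)] rel_sym[OF toc[OF this(2)]]
    show "(x, y) \<in> (rel F (Tv v \<inter> C))\<^sup>*" by (rule rel_trans)
  qed
qed

lemma region_pd:
  assumes fin: "finite U" and ne: "U \<noteq> {}" and UV: "U \<subseteq> V" and cU: "\<forall>u\<in>U. c \<in> Tv u" and C: "c \<in> C" "C \<subseteq> N"
    and edge: "\<forall>x y. {x, y} \<in> F \<longrightarrow> x \<in> C \<longrightarrow> y \<notin> C \<longrightarrow> x = c"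
  shows "\<exists>L. npd (\<Union>u\<in>U. Tv u \<inter> C) F L \<and> (\<forall>Y\<in>set L. card Y \<le> card U * (p + 1))
     \<and> connected_in F (\<Union>u\<in>U. Tv u \<inter> C)"
  using fin ne UV cU
proof (induction U rule: finite_ne_induct)
  case (singleton u)
  then have u: "u \<in> V" "c \<in> Tv u" by auto
  obtain P where P: "npd (Tv u) F P" "\<forall>Y\<in>set P. card Y \<le> p + 1" using Tv_pd[OF u(1)] by blast
  have r: "npd (Tv u \<inter> C) F (map (\<lambda>X. X \<inter> (Tv u \<inter> C)) P)" using npd_restrict[OF P(1) Int_lower1] .
  have "card Y \<le> p + 1" if hY: "Y \<in> set (map (\<lambda>X. X \<inter> (Tv u \<inter> C)) P)" for Y
  proof -
    obtain X where X: "X \<in> set P" "Y = X \<inter> (Tv u \<inter> C)" using hY by auto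
    have "X \<subseteq> N" using npdD(2)[OF P(1) X(1)] by blast
    then have "finite X" using finite_subset[OF _ finN] by blast
    moreover have "Y \<subseteq> X" using X(2) by blast
    ultimately have "card Y \<le> card X" by (rule card_mono)
    then show ?thesis using P(2) X(1) by (meson le_trans)
  qed
  then have bb: "\<forall>Y\<in>set (map (\<lambda>X. X \<inter> (Tv u \<inter> C)) P). card Y \<le> card {u} * (p + 1)" by simp
  have eq: "(\<Union>u\<in>{u}. Tv u \<inter> C) = Tv u \<inter> C" by simp
  show ?case unfolding eq using r bb conn_inter[OF u C(1) edge] by blast
next
  case (insert u U)
  then have u: "u \<in> V" "c \<in> Tv u" and UV: "U \<subseteq> V" "\<forall>u\<in>U. c \<in> Tv u" by auto
  obtain L where L: "npd (\<Union>u\<in>U. Tv u \<inter> C) F L" "\<forall>Y\<in>set L. card Y \<le> card U * (p + 1)"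
    "connected_in F (\<Union>u\<in>U. Tv u \<inter> C)" using insert.IH UV by blast
  obtain P where P: "npd (Tv u) F P" "\<forall>Y\<in>set P. card Y \<le> p + 1" using Tv_pd[OF u(1)] by blast
  have r: "npd (Tv u \<inter> C) F (map (\<lambda>X. X \<inter> (Tv u \<inter> C)) P)" using npd_restrict[OF P(1) Int_lower1] .
  have rb: "\<forall>Y\<in>set (map (\<lambda>X. X \<inter> (Tv u \<inter> C)) P). card Y \<le> p + 1"
  proof
    fix Y assume "Y \<in> set (map (\<lambda>X. X \<inter> (Tv u \<inter> C)) P)"
    then obtain X where X: "X \<in> set P" "Y = X \<inter> (Tv u \<inter> C)" by auto
    have "X \<subseteq> N" using npdD(2)[OF P(1) X(1)] by blast
    then have "finite X" using finite_subset[OF _ finN] by blast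
    moreover have "Y \<subseteq> X" using X(2) by blast
    ultimately have "card Y \<le> card X" by (rule card_mono)
    then show "card Y \<le> p + 1" using P(2) X(1) by (meson le_trans)
  qed
  have cu: "connected_in F (Tv u \<inter> C)" using conn_inter[OF u C(1) edge] .
  have sub1: "(\<Union>u\<in>U. Tv u \<inter> C) \<subseteq> N" and sub2: "Tv u \<inter> C \<subseteq> N" by auto
  have meet: "(\<Union>u\<in>U. Tv u \<inter> C) \<inter> (Tv u \<inter> C) \<noteq> {}" using insert.hyps(2) UV(2) u(2) C(1) by blast
  obtain L' where L': "npd ((\<Union>u\<in>U. Tv u \<inter> C) \<union> (Tv u \<inter> C)) F L'"
     "\<forall>Y\<in>set L'. card Y \<le> card U * (p + 1) + (p + 1)"
    using npd_union[OF T sub1 sub2 L(3) cu meet L(1) r L(2) rb] by blast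
  have eq: "(\<Union>u\<in>insert u U. Tv u \<inter> C) = (\<Union>u\<in>U. Tv u \<inter> C) \<union> (Tv u \<inter> C)" by blast
  have cd: "card (insert u U) * (p + 1) = card U * (p + 1) + (p + 1)" using insert.hyps by simp
  have "connected_in F ((\<Union>u\<in>U. Tv u \<inter> C) \<union> (Tv u \<inter> C))"
  proof -
    obtain z where "z \<in> (\<Union>u\<in>U. Tv u \<inter> C) \<inter> (Tv u \<inter> C)" using meet by blast
    then show ?thesis using connected_union[OF L(3) cu] by blast
  qed
  then show ?case unfolding eq cd using L' by blast
qed

end



context lsetting begin

definition Ow :: "'b set \<Rightarrow> 'a set \<Rightarrow> 'a set" where
  "Ow C S = {v \<in> V. Tv v \<inter> C \<noteq> {}} - S"

definition hyps :: "'b set \<Rightarrow> 'b \<Rightarrow> 'a set \<Rightarrow> bool" where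
  "hyps C c S \<longleftrightarrow> C \<subseteq> N \<and> c \<in> C \<and> connected_in F C \<and> S \<subseteq> V \<and> card S \<le> w \<and> S \<subseteq> B c \<and>
     (\<forall>v\<in>V. Tv v \<inter> C \<noteq> {} \<longrightarrow> \<not> Tv v \<subseteq> C \<longrightarrow> v \<in> S) \<and>
     (\<forall>x y. {x, y} \<in> F \<longrightarrow> x \<in> C \<longrightarrow> y \<notin> C \<longrightarrow> x = c)"

definition good_out :: "'b set \<Rightarrow> 'a set \<Rightarrow> nat \<Rightarrow> 'b set list \<Rightarrow> ('a \<Rightarrow> nat) \<Rightarrow> bool" where
  "good_out C S l Z f \<longleftrightarrow> npd C F Z \<and>
     (\<forall>x\<in>C. \<forall>u\<in>B x. \<forall>v\<in>B x. u \<in> Ow C S \<longrightarrow> v \<in> Ow C S \<longrightarrow> f u \<le> f v + 1) \<and>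
     (\<forall>x\<in>C. \<forall>u\<in>B x. u \<in> Ow C S \<longrightarrow> B x \<inter> S \<noteq> {} \<longrightarrow> f u = l) \<and>
     (\<forall>u\<in>Ow C S. l \<le> f u) \<and>
     (\<forall>Y\<in>set Z. \<forall>i. \<exists>W\<subseteq>Y. card W \<le> w * (p + 1) \<and>
        {v \<in> Ow C S. f v = i \<and> (\<exists>x\<in>Y. v \<in> B x)} \<subseteq> \<Union>(B ` W))"

end

locale lstep = lsetting +
  fixes C :: "'b set" and c :: 'b and S :: "'a set"
  assumes H: "hyps C c S"
begin

lemma hC: "C \<subseteq> N" "c \<in> C" "connected_in F C" "S \<subseteq> V" "card S \<le> w" "S \<subseteq> B c"
  "\<And>v. v \<in> V \<Longrightarrow> Tv v \<inter> C \<noteq> {} \<Longrightarrow> \<not> Tv v \<subseteq> C \<Longrightarrow> v \<in> S"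
  "\<And>x y. {x, y} \<in> F \<Longrightarrow> x \<in> C \<Longrightarrow> y \<notin> C \<Longrightarrow> x = c"
  using H unfolding hyps_def by blast+

lemma cN: "c \<in> N" using hC(1,2) by blast
lemma finC: "finite C" using hC(1) finN finite_subset by blast
lemma edgeC: "\<forall>x y. {x, y} \<in> F \<longrightarrow> x \<in> C \<longrightarrow> y \<notin> C \<longrightarrow> x = c" using hC(8) by blast

definition Sd :: "'a set" where
  "Sd = (if S \<noteq> {} then S else if B c \<noteq> {} then {SOME v. v \<in> B c} else {})"

lemma Sd_props: "Sd \<subseteq> B c" "Sd \<subseteq> V" "finite Sd" "card Sd \<le> w" "S \<subseteq> Sd"
  "S \<noteq> {} \<Longrightarrow> Sd = S" "Sd = {} \<Longrightarrow> B c = {}"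
proof -
  have Bc: "B c \<subseteq> V" using Bsub[OF cN] .
  show a: "Sd \<subseteq> B c"
  proof (cases "S \<noteq> {}")
    case True then show ?thesis using hC(6) unfolding Sd_def by simp
  next
    case False
    then show ?thesis unfolding Sd_def by (auto intro: someI)
  qed
  then show "Sd \<subseteq> V" using Bc by blast
  show "finite Sd" using a Bfin[OF cN] finite_subset by blast
  show "card Sd \<le> w"
  proof (cases "S \<noteq> {}")
    case True then show ?thesis using hC(5) unfolding Sd_def by simp
  next
    case False
    then have "card Sd \<le> 1" unfolding Sd_def by auto
    then show ?thesis using w1 by linarith
  qed
  show "S \<subseteq> Sd" unfolding Sd_def by auto
  show "S \<noteq> {} \<Longrightarrow> Sd = S" unfolding Sd_def by simp
  show "Sd = {} \<Longrightarrow> B c = {}" unfolding Sd_def by (auto split: if_splits)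
qed

lemma c_Tv: "u \<in> Sd \<Longrightarrow> c \<in> Tv u" using Sd_props(1) cN by blast

definition R :: "'b set" where "R = {c} \<union> (\<Union>u\<in>Sd. Tv u \<inter> C)"

lemma R_props: "R \<subseteq> C" "c \<in> R" "connected_in F R" "R \<subseteq> N"
proof -
  show "R \<subseteq> C" unfolding R_def using hC(2) by blast
  then show "R \<subseteq> N" using hC(1) by blast
  show "c \<in> R" unfolding R_def by blast
  have "connected_in F ({c} \<union> \<Union>((\<lambda>u. Tv u \<inter> C) ` Sd))"
  proof (rule connected_Union)
    fix X assume "X \<in> (\<lambda>u. Tv u \<inter> C) ` Sd"
    then obtain u where u: "u \<in> Sd" "X = Tv u \<inter> C" by blast
    have "u \<in> V" using u(1) Sd_props(2) by blast
    then have "connected_in F (Tv u \<inter> C)" using conn_inter[OF _ c_Tv[OF u(1)] hC(2) edgeC] by blast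
    moreover have "c \<in> Tv u \<inter> C" using c_Tv[OF u(1)] hC(2) by blast
    ultimately show "connected_in F X \<and> c \<in> X" using u(2) by simp
  next
    show "connected_in F {c}" unfolding connected_in_rel by simp
  qed simp
  then show "connected_in F R" unfolding R_def by simp
qed

lemma R_pd: "\<exists>ZR. npd R F ZR \<and> (\<forall>Y\<in>set ZR. card Y \<le> w * (p + 1))"
proof (cases "Sd = {}")
  case True
  then have R: "R = {c}" unfolding R_def by simp
  have "npd {c} F [{c}]"
  proof (rule npdI)
    show "contig x [{c}]" for x unfolding contig_def by auto
  qed auto
  moreover have "card {c} \<le> w * (p + 1)" using w1 by simp
  ultimately show ?thesis unfolding R by (intro exI[of _ "[{c}]"]) simp
next
  case False
  have cU: "\<forall>u\<in>Sd. c \<in> Tv u" using c_Tv by blast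
  obtain L where L: "npd (\<Union>u\<in>Sd. Tv u \<inter> C) F L" "\<forall>Y\<in>set L. card Y \<le> card Sd * (p + 1)"
    using region_pd[OF Sd_props(3) False Sd_props(2) cU hC(2) hC(1) edgeC] by blast
  have Req: "R = (\<Union>u\<in>Sd. Tv u \<inter> C)" unfolding R_def using False cU hC(2) by blast
  have bnd: "\<forall>Y\<in>set L. card Y \<le> w * (p + 1)"
  proof
    fix Y assume "Y \<in> set L"
    then have "card Y \<le> card Sd * (p + 1)" using L(2) by blast
    also have "\<dots> \<le> w * (p + 1)" by (rule mult_le_mono1[OF Sd_props(4)])
    finally show "card Y \<le> w * (p + 1)" .
  qed
  show ?thesis unfolding Req using L(1) bnd by blast
qed

definition K :: "'b set" where "K = C - R"
definition Dset :: "'b set set" where "Dset = tcomp F K ` K"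

lemma finDset: "finite Dset" unfolding Dset_def K_def using finC by simp

lemma D_props:
  assumes "D \<in> Dset"
  shows "D \<subseteq> K" "D \<noteq> {}" "connected_in F D" "D \<inter> R = {}" "D \<subseteq> C" "D \<subseteq> N" "c \<notin> D"
    "card D < card C" "\<exists>d\<in>K. D = tcomp F K d"
proof -
  obtain d where d: "d \<in> K" "D = tcomp F K d" using assms unfolding Dset_def by blast
  then show "\<exists>d\<in>K. D = tcomp F K d" by blast
  show DK: "D \<subseteq> K" using comp_sub d(2) by simp
  show "D \<noteq> {}" using comp_self[OF d(1)] d(2) by blast
  show "connected_in F D" using comp_connected[OF d(1)] d(2) by simp
  show "D \<inter> R = {}" using DK unfolding K_def by blast
  show DC: "D \<subseteq> C" using DK unfolding K_def by blast
  then show "D \<subseteq> N" using hC(1) by blast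
  show cD: "c \<notin> D" using DK R_props(2) unfolding K_def by blast
  have "D \<subset> C" using DC cD hC(2) by blast
  then show "card D < card C" using finC psubset_card_mono by blast
qed

definition att :: "'b set \<Rightarrow> 'b" where "att D = (SOME a. a \<in> R \<and> (\<exists>y\<in>D. {a, y} \<in> F))"
definition cD :: "'b set \<Rightarrow> 'b" where "cD D = (SOME y. y \<in> D \<and> {att D, y} \<in> F)"

lemma att_props:
  assumes "D \<in> Dset"
  shows "att D \<in> R" "cD D \<in> D" "{att D, cD D} \<in> F"
proof -
  obtain d where d: "d \<in> K" "D = tcomp F K d" using D_props(9)[OF assms] by blast
  have "c \<in> C \<inter> R" using hC(2) R_props(2) by blast
  moreover have "d \<in> C - R" using d(1) unfolding K_def .
  ultimately obtain x y where xy: "{x, y} \<in> F" "x \<in> R" "y \<in> D"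
    using comp_attach[OF hC(3)] d(2) unfolding K_def by blast
  then have ex: "\<exists>a. a \<in> R \<and> (\<exists>y\<in>D. {a, y} \<in> F)" by blast
  have a: "att D \<in> R \<and> (\<exists>y\<in>D. {att D, y} \<in> F)" unfolding att_def using someI_ex[OF ex] .
  then show "att D \<in> R" by blast
  have ex2: "\<exists>y. y \<in> D \<and> {att D, y} \<in> F" using a by blast
  have "cD D \<in> D \<and> {att D, cD D} \<in> F" unfolding cD_def using someI_ex[OF ex2] .
  then show "cD D \<in> D" "{att D, cD D} \<in> F" by blast+
qed

lemma edge_D:
  assumes D: "D \<in> Dset" and e: "{x, y} \<in> F" "y \<in> D" "x \<notin> D"
  shows "x = att D \<and> y = cD D"
proof -
  have yC: "y \<in> C" using D_props(5)[OF D] e(2) by blast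
  have xC: "x \<in> C"
  proof (rule ccontr)
    assume "x \<notin> C"
    moreover have "{y, x} \<in> F" using e(1) by (simp add: insert_commute)
    ultimately have "y = c" using hC(8) yC by blast
    then show False using D_props(7)[OF D] e(2) by blast
  qed
  have xR: "x \<in> R"
  proof (rule ccontr)
    assume "x \<notin> R"
    then have xK: "x \<in> K" using xC unfolding K_def by blast
    obtain d where d: "d \<in> K" "D = tcomp F K d" using D_props(9)[OF D] by blast
    have "{y, x} \<in> F" using e(1) by (simp add: insert_commute)
    then have "x \<in> D" using comp_edge[of y x F K d] e(2) xK d(2) by blast
    then show False using e(3) by blast
  qed
  have RD: "R \<inter> D = {}" using D_props(4)[OF D] by blast
  show ?thesis
    using tree_unique_edge[OF T R_props(4) D_props(6)[OF D] RD R_props(3) D_props(3)[OF D] e(1) xR e(2)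
        att_props(3)[OF D] att_props(1)[OF D] att_props(2)[OF D]] by blast
qed

definition SD :: "'b set \<Rightarrow> 'a set" where "SD D = {v \<in> V. Tv v \<inter> D \<noteq> {} \<and> \<not> Tv v \<subseteq> D}"

lemma SD_sub:
  assumes D: "D \<in> Dset" and v: "v \<in> SD D"
  shows "cD D \<in> Tv v" "att D \<in> Tv v"
proof -
  from v obtain x y where v': "v \<in> V" "x \<in> Tv v" "x \<in> D" "y \<in> Tv v" "y \<notin> D" unfolding SD_def by blast
  have "(x, y) \<in> (rel F (Tv v))\<^sup>*" using Tv_con[OF v'(1)] v' unfolding connected_in_rel by blast
  from path_exit[OF this v'(3)]
  consider "(x, y) \<in> (rel F (Tv v \<inter> D))\<^sup>*"
    | a b where "{a, b} \<in> F" "a \<in> Tv v \<inter> D" "b \<in> Tv v - D" by blast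
  then have "cD D \<in> Tv v \<and> att D \<in> Tv v"
  proof cases
    case 1
    from rel_in[OF this] have False using v' by blast
    then show ?thesis ..
  next
    case 2
    have "{b, a} \<in> F" using 2(1) by (simp add: insert_commute)
    then have "b = att D \<and> a = cD D" using edge_D[OF D] 2 by blast
    then show ?thesis using 2 by blast
  qed
  then show "cD D \<in> Tv v" "att D \<in> Tv v" by blast+
qed

lemma SD_card:
  assumes D: "D \<in> Dset"
  shows "card (SD D) \<le> w"
proof (cases "SD D = {}")
  case True then show ?thesis by simp
next
  case False
  have aN: "att D \<in> N" using att_props(1)[OF D] R_props(4) by blast
  have sub: "SD D \<subseteq> B (att D)" using SD_sub(2)[OF D] by blast
  show ?thesis
  proof (cases "\<exists>u\<in>Sd. att D \<in> Tv u \<inter> C")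
    case True
    then obtain u where u: "u \<in> Sd" "att D \<in> Tv u" "att D \<in> C" by blast
    have "u \<notin> SD D"
    proof
      assume "u \<in> SD D"
      then have "cD D \<in> Tv u" using SD_sub(1)[OF D] by blast
      moreover have "cD D \<in> C" using att_props(2)[OF D] D_props(5)[OF D] by blast
      ultimately have "cD D \<in> Tv u \<inter> C" by (rule IntI)
      then have "cD D \<in> (\<Union>u\<in>Sd. Tv u \<inter> C)" using u(1) by (intro UN_I)
      then have "cD D \<in> R" unfolding R_def by (rule UnI2)
      then show False using att_props(2)[OF D] D_props(4)[OF D] by blast
    qed
    moreover have "u \<in> B (att D)" using u(2) by blast
    ultimately have "SD D \<subseteq> B (att D) - {u}" using sub by blast
    then have "card (SD D) \<le> card (B (att D) - {u})" using card_mono[OF finite_Diff[OF Bfin[OF aN]]] by blast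
    also have "\<dots> = card (B (att D)) - 1" using \<open>u \<in> B (att D)\<close> by simp
    also have "\<dots> \<le> w" using Bcard[OF aN] by simp
    finally show ?thesis .
  next
    case False
    have "att D \<in> {c} \<union> (\<Union>u\<in>Sd. Tv u \<inter> C)" using att_props(1)[OF D] unfolding R_def .
    then have "att D = c"
    proof (rule UnE)
      assume "att D \<in> (\<Union>u\<in>Sd. Tv u \<inter> C)"
      then obtain u where "u \<in> Sd" "att D \<in> Tv u \<inter> C" by (rule UN_E)
      then show ?thesis using False by blast
    qed simp
    have "Sd = {}"
    proof (rule ccontr)
      assume "Sd \<noteq> {}"
      then obtain u where "u \<in> Sd" by blast
      have "c \<in> Tv u \<inter> C" using c_Tv[OF \<open>u \<in> Sd\<close>] hC(2) by (rule IntI)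
      then have "att D \<in> Tv u \<inter> C" unfolding \<open>att D = c\<close> .
      then show False using False \<open>u \<in> Sd\<close> by blast
    qed
    then have "B c = {}" using Sd_props(7) by blast
    then have "SD D = {}" using sub unfolding \<open>att D = c\<close> by blast
    then show ?thesis by simp
  qed
qed

lemma hyps_D:
  assumes D: "D \<in> Dset"
  shows "hyps D (cD D) (SD D)"
  unfolding hyps_def
proof (intro conjI allI impI ballI)
  show "D \<subseteq> N" using D_props(6)[OF D] .
  show "cD D \<in> D" using att_props(2)[OF D] .
  show "connected_in F D" using D_props(3)[OF D] .
  show "SD D \<subseteq> V" unfolding SD_def by blast
  show "card (SD D) \<le> w" using SD_card[OF D] .
  show "SD D \<subseteq> B (cD D)" using SD_sub(1)[OF D] by blast
  show "v \<in> SD D" if "v \<in> V" "Tv v \<inter> D \<noteq> {}" "\<not> Tv v \<subseteq> D" for v using that unfolding SD_def by blast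
  show "x = cD D" if h: "{x, y} \<in> F" "x \<in> D" "y \<notin> D" for x y
  proof -
    have yx: "{y, x} \<in> F" using h(1) by (simp add: insert_commute)
    show ?thesis using edge_D[OF D yx h(2) h(3)] by simp
  qed
qed

end



context lstep begin

definition RO :: "'a set" where "RO = {v \<in> Ow C S. Tv v \<inter> R \<noteq> {}}"

lemma Ow_D: "v \<in> Ow X Y \<longleftrightarrow> v \<in> V \<and> Tv v \<inter> X \<noteq> {} \<and> v \<notin> Y"
  unfolding Ow_def by blast

lemma comp_same:
  assumes "D \<in> Dset" "D' \<in> Dset" "x \<in> D" "x \<in> D'"
  shows "D = D'"
proof (rule ccontr)
  assume ne: "D \<noteq> D'"
  obtain d where d: "d \<in> K" "D = tcomp F K d" using D_props(9)[OF assms(1)] by blast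
  obtain d' where d': "d' \<in> K" "D' = tcomp F K d'" using D_props(9)[OF assms(2)] by blast
  have "tcomp F K d \<noteq> tcomp F K d'" using ne d d' by simp
  from comp_disj[OF this] show False using assms(3,4) d d' by blast
qed

lemma own_split:
  assumes v: "v \<in> Ow C S" "v \<notin> RO"
  shows "\<exists>D\<in>Dset. v \<in> Ow D (SD D) \<and> Tv v \<subseteq> D"
proof -
  have vV: "v \<in> V" and vC: "Tv v \<inter> C \<noteq> {}" and vS: "v \<notin> S" using v(1) unfolding Ow_D by blast+
  have sub: "Tv v \<subseteq> C" using hC(7)[OF vV vC] vS by blast
  have nR: "Tv v \<inter> R = {}" using v unfolding RO_def by blast
  have subK: "Tv v \<subseteq> K" using sub nR unfolding K_def by blast
  obtain x where x: "x \<in> Tv v" using Tv_ne[OF vV] by blast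
  have xK: "x \<in> K" using x subK by blast
  let ?D = "tcomp F K x"
  have D: "?D \<in> Dset" unfolding Dset_def using xK by blast
  have TD: "Tv v \<subseteq> ?D"
  proof
    fix y assume y: "y \<in> Tv v"
    have "(x, y) \<in> (rel F (Tv v))\<^sup>*" using Tv_con[OF vV] x y unfolding connected_in_rel by blast
    then have "(x, y) \<in> (rel F K)\<^sup>*" using rel_mono[OF subK order_refl] by blast
    then show "y \<in> ?D" unfolding tcomp_def using y subK by blast
  qed
  have "v \<notin> SD D" if "D = ?D" for D using TD that unfolding SD_def by blast
  then have "v \<in> Ow ?D (SD ?D)" unfolding Ow_D using vV x TD by blast
  then show ?thesis using D TD by blast
qed

lemma own_sub:
  assumes D: "D \<in> Dset" and v: "v \<in> Ow D (SD D)"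
  shows "Tv v \<subseteq> D" "v \<in> Ow C S" "v \<notin> RO"
proof -
  have vV: "v \<in> V" and vD: "Tv v \<inter> D \<noteq> {}" and vS: "v \<notin> SD D" using v unfolding Ow_D by blast+
  show TD: "Tv v \<subseteq> D" using vS vV vD unfolding SD_def by blast
  have "v \<notin> S"
  proof
    assume "v \<in> S"
    then have "c \<in> Tv v" using hC(6) cN by blast
    then show False using TD D_props(7)[OF D] by blast
  qed
  moreover have "Tv v \<inter> C \<noteq> {}" using vD D_props(5)[OF D] by blast
  ultimately show "v \<in> Ow C S" unfolding Ow_D using vV by blast
  show "v \<notin> RO" using TD D_props(4)[OF D] unfolding RO_def by blast
qed

lemma own_uniq:
  assumes "D \<in> Dset" "D' \<in> Dset" "v \<in> Ow D (SD D)" "v \<in> Ow D' (SD D')"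
  shows "D = D'"
proof -
  have vV: "v \<in> V" using assms(3) unfolding Ow_D by blast
  obtain x where "x \<in> Tv v" using Tv_ne[OF vV] by blast
  then have "x \<in> D" "x \<in> D'" using own_sub(1)[OF assms(1,3)] own_sub(1)[OF assms(2,4)] by blast+
  then show ?thesis using comp_same assms(1,2) by blast
qed

lemma Bx_R:
  assumes "x \<in> R" "v \<in> B x" "v \<in> Ow C S"
  shows "v \<in> RO"
  using assms R_props(4) unfolding RO_def by blast

lemma Bx_D:
  assumes D: "D \<in> Dset" and x: "x \<in> D" "v \<in> B x" and v: "v \<in> Ow C S"
  shows "(v \<in> RO \<and> v \<in> SD D) \<or> v \<in> Ow D (SD D)"
proof (cases "v \<in> RO")
  case True
  have xN: "x \<in> N" using x(1) D_props(6)[OF D] by blast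
  have "Tv v \<inter> R \<noteq> {}" using True unfolding RO_def by blast
  then have "\<not> Tv v \<subseteq> D" using D_props(4)[OF D] by blast
  moreover have "Tv v \<inter> D \<noteq> {}" using xN x by blast
  moreover have "v \<in> V" using v unfolding Ow_D by blast
  ultimately show ?thesis using True unfolding SD_def by blast
next
  case False
  obtain D' where D': "D' \<in> Dset" "v \<in> Ow D' (SD D')" "Tv v \<subseteq> D'" using own_split[OF v False] by blast
  have xN: "x \<in> N" using x(1) D_props(6)[OF D] by blast
  have "x \<in> D'" using D'(3) xN x(2) by blast
  then have "D' = D" using comp_same[OF D'(1) D] x(1) by blast
  then show ?thesis using D'(2) by blast
qed

lemma S_R:
  assumes "s \<in> S" "x \<in> C" "s \<in> B x"
  shows "x \<in> R"
proof -
  have "Sd = S" using Sd_props(6) assms(1) by blast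
  then have "s \<in> Sd" using assms(1) by simp
  moreover have "x \<in> Tv s \<inter> C" using assms(2,3) hC(1) by blast
  ultimately have "x \<in> (\<Union>u\<in>Sd. Tv u \<inter> C)" by blast
  then show ?thesis unfolding R_def by (rule UnI2)
qed

end



context lstep begin

lemma good_outD:
  assumes "good_out X Y l Z f"
  shows "npd X F Z"
    "\<And>x u v. x \<in> X \<Longrightarrow> u \<in> B x \<Longrightarrow> v \<in> B x \<Longrightarrow> u \<in> Ow X Y \<Longrightarrow> v \<in> Ow X Y \<Longrightarrow> f u \<le> f v + 1"
    "\<And>x u. x \<in> X \<Longrightarrow> u \<in> B x \<Longrightarrow> u \<in> Ow X Y \<Longrightarrow> B x \<inter> Y \<noteq> {} \<Longrightarrow> f u = l"
    "\<And>u. u \<in> Ow X Y \<Longrightarrow> l \<le> f u"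
    "\<And>Q i. Q \<in> set Z \<Longrightarrow> \<exists>W\<subseteq>Q. card W \<le> w * (p + 1) \<and>
        {v \<in> Ow X Y. f v = i \<and> (\<exists>x\<in>Q. v \<in> B x)} \<subseteq> \<Union>(B ` W)"
proof -
  note a = assms[unfolded good_out_def]
  show "npd X F Z" using a by (elim conjE)
  show "\<And>x u v. x \<in> X \<Longrightarrow> u \<in> B x \<Longrightarrow> v \<in> B x \<Longrightarrow> u \<in> Ow X Y \<Longrightarrow> v \<in> Ow X Y \<Longrightarrow> f u \<le> f v + 1"
  proof -
    fix x u v assume h: "x \<in> X" "u \<in> B x" "v \<in> B x" "u \<in> Ow X Y" "v \<in> Ow X Y"
    have "\<forall>x\<in>X. \<forall>u\<in>B x. \<forall>v\<in>B x. u \<in> Ow X Y \<longrightarrow> v \<in> Ow X Y \<longrightarrow> f u \<le> f v + 1" using a by (elim conjE)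
    then show "f u \<le> f v + 1" using h by blast
  qed
  show "\<And>x u. x \<in> X \<Longrightarrow> u \<in> B x \<Longrightarrow> u \<in> Ow X Y \<Longrightarrow> B x \<inter> Y \<noteq> {} \<Longrightarrow> f u = l"
  proof -
    fix x u assume h: "x \<in> X" "u \<in> B x" "u \<in> Ow X Y" "B x \<inter> Y \<noteq> {}"
    have "\<forall>x\<in>X. \<forall>u\<in>B x. u \<in> Ow X Y \<longrightarrow> B x \<inter> Y \<noteq> {} \<longrightarrow> f u = l" using a by (elim conjE)
    then show "f u = l" using h by blast
  qed
  show "\<And>u. u \<in> Ow X Y \<Longrightarrow> l \<le> f u"
  proof -
    fix u assume h: "u \<in> Ow X Y"
    have "\<forall>u\<in>Ow X Y. l \<le> f u" using a by (elim conjE)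
    then show "l \<le> f u" using h by blast
  qed
  show "\<And>Q i. Q \<in> set Z \<Longrightarrow> \<exists>W\<subseteq>Q. card W \<le> w * (p + 1) \<and>
        {v \<in> Ow X Y. f v = i \<and> (\<exists>x\<in>Q. v \<in> B x)} \<subseteq> \<Union>(B ` W)"
  proof -
    fix Q i assume h: "Q \<in> set Z"
    have "\<forall>Y'\<in>set Z. \<forall>i. \<exists>W\<subseteq>Y'. card W \<le> w * (p + 1) \<and>
        {v \<in> Ow X Y. f v = i \<and> (\<exists>x\<in>Y'. v \<in> B x)} \<subseteq> \<Union>(B ` W)" using a by (elim conjE)
    then show "\<exists>W\<subseteq>Q. card W \<le> w * (p + 1) \<and>
        {v \<in> Ow X Y. f v = i \<and> (\<exists>x\<in>Q. v \<in> B x)} \<subseteq> \<Union>(B ` W)" using h by blast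
  qed
qed

lemma combine:
  assumes IH: "\<And>D. D \<in> Dset \<Longrightarrow> \<exists>Z f. good_out D (SD D) (Suc l) Z f"
  shows "\<exists>Z f. good_out C S l Z f"
proof -
  obtain ZR where ZR: "npd R F ZR" "\<forall>Y\<in>set ZR. card Y \<le> w * (p + 1)" using R_pd by blast
  have "\<forall>D\<in>Dset. \<exists>Zf. good_out D (SD D) (Suc l) (fst Zf) (snd Zf)" using IH by fastforce
  then obtain g where g: "\<forall>D\<in>Dset. good_out D (SD D) (Suc l) (fst (g D)) (snd (g D))"
    by (rule bchoice[elim_format]) blast
  define ZD where "ZD D = fst (g D)" for D
  define fD where "fD D = snd (g D)" for D
  have gD: "good_out D (SD D) (Suc l) (ZD D) (fD D)" if "D \<in> Dset" for D
    using g that unfolding ZD_def fD_def by blast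
  obtain Ds where Ds: "set Ds = Dset" "distinct Ds" using finite_distinct_list[OF finDset] by blast
  have props: "\<forall>D\<in>set Ds. npd D F (ZD D) \<and> D \<inter> R = {} \<and> att D \<in> R \<and>
               (\<forall>x y. {x, y} \<in> F \<longrightarrow> x \<in> R \<longrightarrow> y \<in> D \<longrightarrow> x = att D)"
  proof
    fix D assume "D \<in> set Ds"
    then have D: "D \<in> Dset" using Ds(1) by simp
    have "\<forall>x y. {x, y} \<in> F \<longrightarrow> x \<in> R \<longrightarrow> y \<in> D \<longrightarrow> x = att D"
    proof (intro allI impI)
      fix x y assume e: "{x, y} \<in> F" "x \<in> R" "y \<in> D"
      have "x \<notin> D" using e(2) D_props(4)[OF D] by blast
      then show "x = att D" using edge_D[OF D e(1) e(3)] by blast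
    qed
    then show "npd D F (ZD D) \<and> D \<inter> R = {} \<and> att D \<in> R \<and>
               (\<forall>x y. {x, y} \<in> F \<longrightarrow> x \<in> R \<longrightarrow> y \<in> D \<longrightarrow> x = att D)"
      using good_outD(1)[OF gD[OF D]] D_props(4)[OF D] att_props(1)[OF D] by blast
  qed
  have dj: "\<forall>D\<in>set Ds. \<forall>D'\<in>set Ds. D \<noteq> D' \<longrightarrow> D \<inter> D' = {} \<and> (\<forall>x y. {x, y} \<in> F \<longrightarrow> x \<in> D' \<longrightarrow> y \<in> D \<longrightarrow> False)"
  proof (intro ballI impI conjI allI)
    fix D D' assume h: "D \<in> set Ds" "D' \<in> set Ds" "D \<noteq> D'"
    then have D: "D \<in> Dset" and D': "D' \<in> Dset" using Ds(1) by auto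
    show dis: "D \<inter> D' = {}" using comp_same[OF D D'] h(3) by blast
    fix x y assume e: "{x, y} \<in> F" "x \<in> D'" "y \<in> D"
    have "x \<notin> D" using dis e(2) by blast
    then have "x = att D" using edge_D[OF D e(1) e(3)] by blast
    then have "x \<in> R" using att_props(1)[OF D] by simp
    then show False using e(2) D_props(4)[OF D'] by blast
  qed
  obtain L where L: "npd (R \<union> \<Union>(set Ds)) F L"
     "\<forall>Y\<in>set L. Y \<in> set ZR \<or> (\<exists>D\<in>set Ds. \<exists>H\<in>set ZR. \<exists>Q\<in>set (ZD D). att D \<in> H \<and> Y = H \<union> Q)"
    using npd_insert_many[OF ZR(1) props dj Ds(2)] by blast
  have CU: "R \<union> \<Union>(set Ds) = C"
  proof -
    have "\<Union>(set Ds) = K" using Ds(1) comps_Union[of F K] unfolding Dset_def by simp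
    then show ?thesis using R_props(1) unfolding K_def by blast
  qed
  define f where "f v = (if v \<in> RO then l else fD (SOME D. D \<in> Dset \<and> v \<in> Ow D (SD D)) v)" for v
  have f_RO: "v \<in> RO \<Longrightarrow> f v = l" for v unfolding f_def by simp
  have f_D: "f v = fD D v" if D: "D \<in> Dset" and v: "v \<in> Ow D (SD D)" for D v
  proof -
    have nRO: "v \<notin> RO" using own_sub(3)[OF D v] .
    have ex: "\<exists>D. D \<in> Dset \<and> v \<in> Ow D (SD D)" using D v by blast
    have s: "(SOME D. D \<in> Dset \<and> v \<in> Ow D (SD D)) \<in> Dset \<and> v \<in> Ow (SOME D. D \<in> Dset \<and> v \<in> Ow D (SD D)) (SD (SOME D. D \<in> Dset \<and> v \<in> Ow D (SD D)))"
      using someI_ex[OF ex] .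
    have "(SOME D. D \<in> Dset \<and> v \<in> Ow D (SD D)) = D" using own_uniq[OF _ D _ v] s by blast
    then show ?thesis unfolding f_def using nRO by simp
  qed
  have c2: "\<forall>x\<in>C. \<forall>u\<in>B x. \<forall>v\<in>B x. u \<in> Ow C S \<longrightarrow> v \<in> Ow C S \<longrightarrow> f u \<le> f v + 1"
  proof (intro ballI impI)
    fix x u v assume x: "x \<in> C" and u: "u \<in> B x" "u \<in> Ow C S" and v: "v \<in> B x" "v \<in> Ow C S"
    show "f u \<le> f v + 1"
    proof (cases "x \<in> R")
      case True
      then show ?thesis using f_RO Bx_R[OF True u(1) u(2)] Bx_R[OF True v(1) v(2)] by simp
    next
      case False
      then have xK: "x \<in> K" using x unfolding K_def by blast
      let ?D = "tcomp F K x"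
      have D: "?D \<in> Dset" unfolding Dset_def using xK by blast
      have xD: "x \<in> ?D" using comp_self[OF xK] .
      note gd = good_outD[OF gD[OF D]]
      from Bx_D[OF D xD u(1) u(2)] Bx_D[OF D xD v(1) v(2)]
      consider "u \<in> RO" "v \<in> RO" | "u \<in> RO" "u \<in> SD ?D" "v \<in> Ow ?D (SD ?D)"
        | "u \<in> Ow ?D (SD ?D)" "v \<in> RO" "v \<in> SD ?D" | "u \<in> Ow ?D (SD ?D)" "v \<in> Ow ?D (SD ?D)" by blast
      then show ?thesis
      proof cases
        case 1 then show ?thesis using f_RO by simp
      next
        case 2
        have "B x \<inter> SD ?D \<noteq> {}" using 2(2) u(1) by blast
        then have "fD ?D v = Suc l" using gd(3)[OF xD v(1) 2(3)] by blast
        then show ?thesis using f_RO[OF 2(1)] f_D[OF D 2(3)] by simp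
      next
        case 3
        have "B x \<inter> SD ?D \<noteq> {}" using 3(3) v(1) by blast
        then have "fD ?D u = Suc l" using gd(3)[OF xD u(1) 3(1)] by blast
        then show ?thesis using f_RO[OF 3(2)] f_D[OF D 3(1)] by simp
      next
        case 4
        then show ?thesis using gd(2)[OF xD u(1) v(1) 4(1) 4(2)] f_D[OF D 4(1)] f_D[OF D 4(2)] by simp
      qed
    qed
  qed
  have c3: "\<forall>x\<in>C. \<forall>u\<in>B x. u \<in> Ow C S \<longrightarrow> B x \<inter> S \<noteq> {} \<longrightarrow> f u = l"
  proof (intro ballI impI)
    fix x u assume x: "x \<in> C" and u: "u \<in> B x" "u \<in> Ow C S" and s: "B x \<inter> S \<noteq> {}"
    then obtain s0 where "s0 \<in> S" "s0 \<in> B x" by blast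
    then have "x \<in> R" using S_R x by blast
    then show "f u = l" using Bx_R u f_RO by blast
  qed
  have c4: "\<forall>u\<in>Ow C S. l \<le> f u"
  proof
    fix u assume u: "u \<in> Ow C S"
    show "l \<le> f u"
    proof (cases "u \<in> RO")
      case True then show ?thesis using f_RO by simp
    next
      case False
      then obtain D where D: "D \<in> Dset" "u \<in> Ow D (SD D)" using own_split[OF u] by blast
      have "Suc l \<le> fD D u" using good_outD(4)[OF gD[OF D(1)] D(2)] .
      then show ?thesis using f_D[OF D] by simp
    qed
  qed
  have c5: "\<forall>Y\<in>set L. \<forall>i. \<exists>W\<subseteq>Y. card W \<le> w * (p + 1) \<and>
        {v \<in> Ow C S. f v = i \<and> (\<exists>x\<in>Y. v \<in> B x)} \<subseteq> \<Union>(B ` W)"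
  proof (intro ballI allI)
    fix Y i assume Y: "Y \<in> set L"
    from L(2) Y consider "Y \<in> set ZR"
      | D H Q where "D \<in> Dset" "H \<in> set ZR" "Q \<in> set (ZD D)" "att D \<in> H" "Y = H \<union> Q"
      using Ds(1) by blast
    then show "\<exists>W\<subseteq>Y. card W \<le> w * (p + 1) \<and> {v \<in> Ow C S. f v = i \<and> (\<exists>x\<in>Y. v \<in> B x)} \<subseteq> \<Union>(B ` W)"
    proof cases
      case 1
      then have "card Y \<le> w * (p + 1)" using ZR(2) by blast
      moreover have "{v \<in> Ow C S. f v = i \<and> (\<exists>x\<in>Y. v \<in> B x)} \<subseteq> \<Union>(B ` Y)" by blast
      ultimately show ?thesis by blast
    next
      case 2
      note gd = good_outD[OF gD[OF 2(1)]]
      have HR: "H \<subseteq> R" using npdD(2)[OF ZR(1) 2(2)] .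
      have QD: "Q \<subseteq> D" using npdD(2)[OF gd(1) 2(3)] .
      have QN: "Q \<subseteq> N" using QD D_props(6)[OF 2(1)] by blast
      show ?thesis
      proof (cases "i = l")
        case True
        have "{v \<in> Ow C S. f v = i \<and> (\<exists>x\<in>Y. v \<in> B x)} \<subseteq> \<Union>(B ` H)"
        proof
          fix v assume "v \<in> {v \<in> Ow C S. f v = i \<and> (\<exists>x\<in>Y. v \<in> B x)}"
          then have v: "v \<in> Ow C S" "f v = l" and "\<exists>x\<in>Y. v \<in> B x" using True by auto
          then obtain x where x: "x \<in> Y" "v \<in> B x" by blast
          show "v \<in> \<Union>(B ` H)"
          proof (cases "x \<in> H")
            case True then show ?thesis using x by blast
          next
            case False
            then have xQ: "x \<in> Q" using x(1) 2(5) by blast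
            then have xD: "x \<in> D" using QD by blast
            from Bx_D[OF 2(1) xD x(2) v(1)]
            show ?thesis
            proof
              assume "v \<in> RO \<and> v \<in> SD D"
              then have "att D \<in> Tv v" using SD_sub(2)[OF 2(1)] by blast
              then show ?thesis using 2(4) by blast
            next
              assume vD: "v \<in> Ow D (SD D)"
              have "Suc l \<le> fD D v" using gd(4)[OF vD] .
              then have False using f_D[OF 2(1) vD] v(2) by simp
              then show ?thesis ..
            qed
          qed
        qed
        moreover have "H \<subseteq> Y" "card H \<le> w * (p + 1)" using 2(5) ZR(2) 2(2) by auto
        ultimately show ?thesis by blast
      next
        case False
        obtain W where W: "W \<subseteq> Q" "card W \<le> w * (p + 1)"
          "{v \<in> Ow D (SD D). fD D v = i \<and> (\<exists>x\<in>Q. v \<in> B x)} \<subseteq> \<Union>(B ` W)"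
          using gd(5)[OF 2(3), of i] by blast
        have "{v \<in> Ow C S. f v = i \<and> (\<exists>x\<in>Y. v \<in> B x)} \<subseteq> \<Union>(B ` W)"
        proof
          fix v assume "v \<in> {v \<in> Ow C S. f v = i \<and> (\<exists>x\<in>Y. v \<in> B x)}"
          then have v: "v \<in> Ow C S" "f v = i" and "\<exists>x\<in>Y. v \<in> B x" by auto
          then obtain x where x: "x \<in> Y" "v \<in> B x" by blast
          have nRO: "v \<notin> RO" using f_RO v(2) False by auto
          obtain D' where D': "D' \<in> Dset" "v \<in> Ow D' (SD D')" "Tv v \<subseteq> D'" using own_split[OF v(1) nRO] by blast
          have xN: "x \<in> N" using x(1) 2(5) HR QN R_props(4) by blast
          have xD': "x \<in> D'" using D'(3) xN x(2) by blast
          have "x \<notin> H" using xD' HR D_props(4)[OF D'(1)] by blast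
          then have xQ: "x \<in> Q" using x(1) 2(5) by blast
          then have "D' = D" using comp_same[OF D'(1) 2(1) xD'] QD by blast
          then have "v \<in> Ow D (SD D)" "fD D v = i" using D'(2) f_D[OF 2(1)] v(2) by auto
          then show "v \<in> \<Union>(B ` W)" using W(3) xQ x(2) by blast
        qed
        moreover have "W \<subseteq> Y" using W(1) 2(5) by blast
        ultimately show ?thesis using W(2) by blast
      qed
    qed
  qed
  have "good_out C S l L f"
    unfolding good_out_def using L(1) CU c2 c3 c4 c5 by simp
  then show ?thesis by blast
qed

end



lemma npd_conn_contig:
  assumes Z: "npd Y F Z" and K: "K \<subseteq> Y" "connected_in F K"
    and ijk: "i \<le> j" "j \<le> k" "k < length Z" and ne: "Z ! i \<inter> K \<noteq> {}" "Z ! k \<inter> K \<noteq> {}"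
  shows "Z ! j \<inter> K \<noteq> {}"
proof
  assume J: "Z ! j \<inter> K = {}"
  obtain x0 where x0: "x0 \<in> Z ! i" "x0 \<in> K" using ne(1) by blast
  obtain y0 where y0: "y0 \<in> Z ! k" "y0 \<in> K" using ne(2) by blast
  have "i \<noteq> j" using J x0 by blast
  then have ij: "i < j" using ijk(1) by simp
  have "k \<noteq> j" using J y0 by blast
  then have jk: "j < k" using ijk(2) by simp
  have claim: "\<exists>i'<j. y \<in> Z ! i'" if "(x0, y) \<in> (rel F K)\<^sup>*" for y
    using that
  proof (induction rule: rtrancl_induct)
    case base then show ?case using ij x0 by blast
  next
    case (step y z)
    from step.hyps(2) have e: "{y, z} \<in> F" "y \<in> K" "z \<in> K" by (auto simp: rel_def)
    obtain i' where i': "i' < j" "y \<in> Z ! i'" using step.IH by blast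
    have "y \<in> Y" "z \<in> Y" using e K(1) by blast+
    then obtain X where X: "X \<in> set Z" "y \<in> X" "z \<in> X" using npdD(4)[OF Z e(1)] by blast
    then obtain t where t: "t < length Z" "Z ! t = X" by (meson in_set_conv_nth)
    have "t \<noteq> j" using J X(3) e(3) t(2) by blast
    show ?case
    proof (cases "t < j")
      case True then show ?thesis using X(3) t(2) by blast
    next
      case False
      then have "j < t" using \<open>t \<noteq> j\<close> by simp
      then have "y \<in> Z ! j" using npdD(5)[OF Z, of y] i' X(2) t unfolding contig_def
        by (meson less_imp_le_nat)
      then show ?thesis using J e(2) by blast
    qed
  qed
  have "(x0, y0) \<in> (rel F K)\<^sup>*" using K(2) x0(2) y0(2) unfolding connected_in_rel by blast
  then obtain i'' where "i'' < j" "y0 \<in> Z ! i''" using claim by blast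
  then have "y0 \<in> Z ! j" using npdD(5)[OF Z, of y0] y0(1) jk ijk(3) unfolding contig_def
    by (meson less_imp_le_nat)
  then show False using J y0(2) by blast
qed

context lsetting begin

lemma main: "hyps C c S \<Longrightarrow> \<exists>Z f. good_out C S l Z f"
proof (induction "card C" arbitrary: C c S l rule: less_induct)
  case less
  interpret st: lstep V E N F B w p C c S
    using G w1 good less.prems by unfold_locales
  show ?case
  proof (rule st.combine)
    fix D assume D: "D \<in> st.Dset"
    show "\<exists>Z f. good_out D (st.SD D) (Suc l) Z f"
      using less.hyps[OF st.D_props(8)[OF D] st.hyps_D[OF D]] .
  qed
qed

lemma final: "layered_pathwidth_le V E (w * (p + 1) * (w + 1))"
proof -
  have Nne: "N \<noteq> {}" using T unfolding tree_def by blast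
  then obtain c0 where c0: "c0 \<in> N" by blast
  have Ncon: "connected_in F N" using T unfolding tree_def by blast
  have "hyps N c0 {}"
    unfolding hyps_def
  proof (intro conjI allI impI ballI)
    show "\<And>x y. {x, y} \<in> F \<Longrightarrow> x \<in> N \<Longrightarrow> y \<notin> N \<Longrightarrow> x = c0" using Fedge by blast
    show "\<And>v. v \<in> V \<Longrightarrow> Tv v \<inter> N \<noteq> {} \<Longrightarrow> \<not> Tv v \<subseteq> N \<Longrightarrow> v \<in> {}" by blast
  qed (use c0 Ncon in auto)
  then obtain Z f where gZ: "good_out N {} 0 Z f" using main by blast
  have OwV: "Ow N {} = V"
  proof
    show "Ow N {} \<subseteq> V" unfolding Ow_def by blast
    show "V \<subseteq> Ow N {}"
    proof
      fix v assume v: "v \<in> V"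
      have "Tv v \<inter> N = Tv v" by blast
      then show "v \<in> Ow N {}" unfolding Ow_def using Tv_ne[OF v] v by simp
    qed
  qed
  note gz = gZ[unfolded good_out_def OwV]
  have Z1: "npd N F Z" using gz by (elim conjE)
  have Z2': "\<forall>x\<in>N. \<forall>u\<in>B x. \<forall>v\<in>B x. u \<in> V \<longrightarrow> v \<in> V \<longrightarrow> f u \<le> f v + 1" using gz by (elim conjE)
  have Z5': "\<forall>Y\<in>set Z. \<forall>i. \<exists>W\<subseteq>Y. card W \<le> w * (p + 1) \<and>
        {v \<in> V. f v = i \<and> (\<exists>x\<in>Y. v \<in> B x)} \<subseteq> \<Union>(B ` W)" using gz by (elim conjE)
  have Z2: "\<And>x u v. x \<in> N \<Longrightarrow> u \<in> B x \<Longrightarrow> v \<in> B x \<Longrightarrow> u \<in> V \<Longrightarrow> v \<in> V \<Longrightarrow> f u \<le> f v + 1"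
    using Z2' by blast
  have Z5: "\<And>Q i. Q \<in> set Z \<Longrightarrow> \<exists>W\<subseteq>Q. card W \<le> w * (p + 1) \<and>
        {v \<in> V. f v = i \<and> (\<exists>x\<in>Q. v \<in> B x)} \<subseteq> \<Union>(B ` W)"
    using Z5' by blast
  define Ps where "Ps = map (\<lambda>Y. \<Union>(B ` Y)) Z"
  have ZN: "\<And>Y. Y \<in> set Z \<Longrightarrow> Y \<subseteq> N" using npdD(2)[OF Z1] .
  have mem: "v \<in> Ps ! i \<longleftrightarrow> Z ! i \<inter> Tv v \<noteq> {}" if "i < length Z" for v i
  proof -
    have "Z ! i \<subseteq> N" using ZN that by simp
    then show ?thesis unfolding Ps_def using that by auto
  qed
  have pd: "path_decomposition V E Ps"
    unfolding path_decomposition_def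
  proof (intro conjI ballI)
    show "Ps \<noteq> []" unfolding Ps_def using npdD(1)[OF Z1] by simp
    show "X \<subseteq> V" if hX: "X \<in> set Ps" for X
    proof -
      obtain Y where Y: "Y \<in> set Z" "X = \<Union>(B ` Y)" using hX unfolding Ps_def by auto
      then show ?thesis using ZN[OF Y(1)] Bsub by blast
    qed
    show "\<exists>X\<in>set Ps. e \<subseteq> X" if he: "e \<in> E" for e
    proof -
      obtain x where x: "x \<in> N" "e \<subseteq> B x" using TD he unfolding tree_decomposition_def by blast
      obtain Y where Y: "Y \<in> set Z" "x \<in> Y" using npdD(3)[OF Z1 x(1)] by blast
      then show ?thesis using x(2) unfolding Ps_def by auto
    qed
    show "\<exists>X\<in>set Ps. v \<in> X" if hv: "v \<in> V" for v
    proof -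
      obtain x where x: "x \<in> Tv v" using Tv_ne[OF hv] by blast
      obtain Y where Y: "Y \<in> set Z" "x \<in> Y" using npdD(3)[OF Z1] x by blast
      then show ?thesis using x unfolding Ps_def by auto
    qed
    show "\<forall>i j k. i \<le> j \<and> j \<le> k \<and> k < length Ps \<and> v \<in> Ps ! i \<and> v \<in> Ps ! k \<longrightarrow> v \<in> Ps ! j"
      if v: "v \<in> V" for v
    proof (intro allI impI)
      fix i j k assume h: "i \<le> j \<and> j \<le> k \<and> k < length Ps \<and> v \<in> Ps ! i \<and> v \<in> Ps ! k"
      have len: "length Ps = length Z" unfolding Ps_def by simp
      have "Z ! i \<inter> Tv v \<noteq> {}" "Z ! k \<inter> Tv v \<noteq> {}" using h mem len by auto
      then have "Z ! j \<inter> Tv v \<noteq> {}"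
        using npd_conn_contig[OF Z1 _ Tv_con[OF v], of i j k] h len by auto
      then show "v \<in> Ps ! j" using mem h len by auto
    qed
  qed
  have lay: "layering E f"
    unfolding layering_def
  proof (intro allI impI)
    fix u v assume e: "{u, v} \<in> E"
    obtain x where x: "x \<in> N" "{u, v} \<subseteq> B x" using TD e unfolding tree_decomposition_def by blast
    have uv: "u \<in> B x" "v \<in> B x" using x(2) by auto
    have V: "u \<in> V" "v \<in> V" using uv Bsub[OF x(1)] by blast+
    show "f u \<le> f v + 1 \<and> f v \<le> f u + 1"
      using Z2[OF x(1) uv(1) uv(2) V(1) V(2)] Z2[OF x(1) uv(2) uv(1) V(2) V(1)] by simp
  qed
  have cnt: "card {v \<in> X. f v = i} \<le> w * (p + 1) * (w + 1)" if X: "X \<in> set Ps" for X i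
  proof -
    obtain Y where Y: "Y \<in> set Z" "X = \<Union>(B ` Y)" using X unfolding Ps_def by auto
    obtain W where W: "W \<subseteq> Y" "card W \<le> w * (p + 1)" "{v \<in> V. f v = i \<and> (\<exists>x\<in>Y. v \<in> B x)} \<subseteq> \<Union>(B ` W)"
      using Z5[OF Y(1), of i] by (elim exE conjE)
    have WN: "W \<subseteq> N" using W(1) ZN[OF Y(1)] by blast
    have finW: "finite W" using finite_subset[OF WN finN] .
    have sub: "{v \<in> X. f v = i} \<subseteq> \<Union>(B ` W)"
    proof
      fix v assume "v \<in> {v \<in> X. f v = i}"
      then have vX: "v \<in> X" and fv: "f v = i" by auto
      from vX obtain x where x: "x \<in> Y" "v \<in> B x" unfolding Y(2) by (rule UN_E)
      have xN: "x \<in> N" using x(1) ZN[OF Y(1)] by blast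
      have "v \<in> V" using x(2) Bsub[OF xN] by blast
      then have "v \<in> {v \<in> V. f v = i \<and> (\<exists>x\<in>Y. v \<in> B x)}" using fv x by blast
      then show "v \<in> \<Union>(B ` W)" using W(3) by (rule subsetD[rotated])
    qed
    have "\<forall>x\<in>W. finite (B x)" using WN Bfin by blast
    then have fin: "finite (\<Union>(B ` W))" using finW by simp
    have "card {v \<in> X. f v = i} \<le> card (\<Union>(B ` W))" using card_mono[OF fin sub] .
    also have "\<dots> \<le> (\<Sum>x\<in>W. card (B x))" using card_UN_le[OF finW] by simp
    also have "\<dots> \<le> card W * (w + 1)"
    proof -
      have "\<And>x. x \<in> W \<Longrightarrow> card (B x) \<le> w + 1" using Bcard WN by blast
      then have "(\<Sum>x\<in>W. card (B x)) \<le> of_nat (card W) * (w + 1)" by (rule sum_bounded_above)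
      then show ?thesis by simp
    qed
    also have "\<dots> \<le> w * (p + 1) * (w + 1)" by (rule mult_le_mono1[OF W(2)])
    finally show ?thesis .
  qed
  show ?thesis unfolding layered_pathwidth_le_def
    by (intro exI[of _ Ps] exI[of _ f] conjI pd lay allI ballI cnt)
qed

end

theorem lemma10:
  fixes V :: "'a set" and E :: "'a set set"
    and N :: "'b set" and F :: "'b set set" and B :: "'b \<Rightarrow> 'a set"
    and w p :: nat
  assumes "graph V E"
    and "w \<ge> 1"
    and "good_tree_decomposition w p V E N F B"
  shows "layered_pathwidth_le V E (w * (p + 1) * (w + 1))"
proof -
  interpret lsetting V E N F B w p using assms by unfold_locales
  show ?thesis by (rule final)
qed



end
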